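(* Let $\mathcal O_\ast:\mathrm{Agg}^{\rm forest}\to\mathrm{Set}$ be the trivial (constant one-point) functor. Then $k_!(\mathcal O_\ast)\cong\mathcal O_{\rm genus}$ as functors $\mathrm{Agg}^{\rm ctd}\to\mathrm{Set}$. Concretely, for each finite set $S$ the set of connected components of the comma category $(k\downarrow *_S)$ is in natural bijection with $\mathbb N_0$, via the loop number $b_1=|E|-|V|+1$ of the ghost graph of $\phi:X\to *_S$.
   Context: A graph is $(F,V,\partial,\imath)$ with finite flag set $F$, vertex set $V$, incidence $\partial:F\to V$ and involution $\imath$ (2-element orbits are edges, fixed points outer flags); an aggregate is a graph with $\imath=\mathrm{id}$, and $*_S$ is the one-vertex aggregate with flag set $S$. For a graph morphism between aggregates, given by a surjection on vertices, an injection on flags in the contravariant direction, and a fixed-point-free involution on the flags not in the image, the ghost graph is the source aggregate with this involution added (so its edges are the "virtually contracted" pairs). $\mathrm{Agg}^{\rm ctd}$ is the category of aggregates whose morphisms are generated by isomorphisms, virtual edge contractions ${}_s\circ_t$ (for outer flags $s,t$ at distinct vertices: merge $\partial s,\partial t$, delete $s,t$, ghost edge $\{s,t\}$) and virtual loop contractions $\circ_{st}$ (for distinct $s,t$ at one vertex: delete $s,t$); $\mathrm{Agg}^{\rm forest}$ is the subcategory generated by isomorphisms and virtual edge contractions, and $k:\mathrm{Agg}^{\rm forest}\to\mathrm{Agg}^{\rm ctd}$ is the inclusion. For a functor $\mathcal O:\mathrm{Agg}^{\rm forest}\to\mathrm{Set}$, $k_!(\mathcal O)$ is the pointwise left Kan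 extension: $k_!(\mathcal O)(Y)=\mathrm{colim}_{(X,\phi)\in(k\downarrow Y)}\mathcal O(X)$, where $(k\downarrow Y)$ has objects pairs $(X,\phi:X\to Y)$ with $\phi$ in $\mathrm{Agg}^{\rm ctd}$ and morphisms $\psi:X\to X'$ in $\mathrm{Agg}^{\rm forest}$ with $\phi'\psi=\phi$; morphisms of $\mathrm{Agg}^{\rm ctd}$ act by postcomposition. $\mathcal O_{\rm genus}(X)=\mathbb N_0^{V_X}$, with isomorphisms relabelling vertices, ${}_s\circ_t$ assigning $g(\partial s)+g(\partial t)$ to the merged vertex, and $\circ_{st}$ adding $1$ at $\partial s$ (other values unchanged). *)

theory Defs
  imports Main "HOL-Library.FuncSet"
begin

text \<open>An aggregate is (F, V, d): finite flag set F, finite vertex set V,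
 incidence d : F -> V (extensional, i.e. undefined outside F); the involution is
 the identity, so all flags are outer.\<close>

type_synonym agg = "nat set \<times> nat set \<times> (nat \<Rightarrow> nat)"

definition flags :: "agg \<Rightarrow> nat set" where "flags X = fst X"
definition verts :: "agg \<Rightarrow> nat set" where "verts X = fst (snd X)"
definition bd :: "agg \<Rightarrow> nat \<Rightarrow> nat" where "bd X = snd (snd X)"

definition is_agg :: "agg \<Rightarrow> bool" where
  "is_agg X \<longleftrightarrow> finite (flags X) \<and> finite (verts X) \<and> bd X ` flags X \<subseteq> verts X
     \<and> bd X \<in> extensional (flags X)"

definition star :: "nat set \<Rightarrow> agg" where
  "star S = (S, {0}, restrict (\<lambda>_. 0) S)"

text \<open>A morphism X -> Y between aggregates: (vertex map V_X -> V_Y,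
 flag map F_Y -> F_X (contravariant), fixed-point-free involution on the flags of X
 not in the image). All components are stored extensionally (restricted to their domains).\<close>

type_synonym mor = "(nat \<Rightarrow> nat) \<times> (nat \<Rightarrow> nat) \<times> (nat \<Rightarrow> nat)"

definition vm :: "mor \<Rightarrow> nat \<Rightarrow> nat" where "vm m = fst m"
definition fm :: "mor \<Rightarrow> nat \<Rightarrow> nat" where "fm m = fst (snd m)"
definition iv :: "mor \<Rightarrow> nat \<Rightarrow> nat" where "iv m = snd (snd m)"

definition mcomp :: "agg \<Rightarrow> agg \<Rightarrow> agg \<Rightarrow> mor \<Rightarrow> mor \<Rightarrow> mor" where
  "mcomp X Y Z m1 m2 =
     (restrict (vm m2 \<circ> vm m1) (verts X),
      restrict (fm m1 \<circ> fm m2) (flags Z),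
      restrict (\<lambda>s. if s \<notin> fm m1 ` flags Y then iv m1 s
                     else fm m1 (iv m2 (the_inv_into (flags Y) (fm m1) s)))
               (flags X - fm m1 ` fm m2 ` flags Z))"

definition iso_mor :: "agg \<Rightarrow> agg \<Rightarrow> mor \<Rightarrow> bool" where
  "iso_mor X Y m \<longleftrightarrow> (\<exists>\<sigma>V \<sigma>F. bij_betw \<sigma>V (verts X) (verts Y) \<and> bij_betw \<sigma>F (flags X) (flags Y)
      \<and> (\<forall>f\<in>flags X. bd Y (\<sigma>F f) = \<sigma>V (bd X f))
      \<and> m = (restrict \<sigma>V (verts X), restrict (the_inv_into (flags X) \<sigma>F) (flags Y), (\<lambda>_. undefined)))"

definition edge_ok :: "agg \<Rightarrow> nat \<Rightarrow> nat \<Rightarrow> bool" where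
  "edge_ok X s t \<longleftrightarrow> s \<in> flags X \<and> t \<in> flags X \<and> bd X s \<noteq> bd X t"

definition edge_target :: "agg \<Rightarrow> nat \<Rightarrow> nat \<Rightarrow> agg" where
  "edge_target X s t = (flags X - {s, t}, verts X - {bd X t},
     restrict (\<lambda>f. if bd X f = bd X t then bd X s else bd X f) (flags X - {s, t}))"

definition edge_mor :: "agg \<Rightarrow> nat \<Rightarrow> nat \<Rightarrow> mor" where
  "edge_mor X s t = (restrict (\<lambda>v. if v = bd X t then bd X s else v) (verts X),
     restrict id (flags X - {s, t}), restrict (\<lambda>x. if x = s then t else s) {s, t})"

definition loop_ok :: "agg \<Rightarrow> nat \<Rightarrow> nat \<Rightarrow> bool" where
  "loop_ok X s t \<longleftrightarrow> s \<in> flags X \<and> t \<in> flags X \<and> s \<noteq> t \<and> bd X s = bd X t"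

definition loop_target :: "agg \<Rightarrow> nat \<Rightarrow> nat \<Rightarrow> agg" where
  "loop_target X s t = (flags X - {s, t}, verts X, restrict (bd X) (flags X - {s, t}))"

definition loop_mor :: "agg \<Rightarrow> nat \<Rightarrow> nat \<Rightarrow> mor" where
  "loop_mor X s t = (restrict id (verts X), restrict id (flags X - {s, t}),
     restrict (\<lambda>x. if x = s then t else s) {s, t})"

inductive ctd :: "agg \<Rightarrow> agg \<Rightarrow> mor \<Rightarrow> bool" where
  ctd_iso: "is_agg X \<Longrightarrow> is_agg Y \<Longrightarrow> iso_mor X Y m \<Longrightarrow> ctd X Y m"
| ctd_edge: "is_agg X \<Longrightarrow> edge_ok X s t \<Longrightarrow> ctd X (edge_target X s t) (edge_mor X s t)"
| ctd_loop: "is_agg X \<Longrightarrow> loop_ok X s t \<Longrightarrow> ctd X (loop_target X s t) (loop_mor X s t)"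
| ctd_comp: "ctd X Y m1 \<Longrightarrow> ctd Y Z m2 \<Longrightarrow> ctd X Z (mcomp X Y Z m1 m2)"

inductive forest :: "agg \<Rightarrow> agg \<Rightarrow> mor \<Rightarrow> bool" where
  forest_iso: "is_agg X \<Longrightarrow> is_agg Y \<Longrightarrow> iso_mor X Y m \<Longrightarrow> forest X Y m"
| forest_edge: "is_agg X \<Longrightarrow> edge_ok X s t \<Longrightarrow> forest X (edge_target X s t) (edge_mor X s t)"
| forest_comp: "forest X Y m1 \<Longrightarrow> forest Y Z m2 \<Longrightarrow> forest X Z (mcomp X Y Z m1 m2)"

text \<open>A functor O : Agg^forest -> Set is given by its object part Ob and its action
 Ar X X' psi : O(X) -> O(X'). k_!(O)(Y) is the colimit over (k | Y), i.e. the set of pairs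
 ((X,phi), o) with phi : X -> Y in Agg^ctd and o in O(X), modulo the equivalence relation
 generated by ((X,phi),o) ~ ((X',phi'), O(psi) o) for psi : X -> X' in Agg^forest with
 phi' psi = phi.\<close>

definition lan_carrier :: "(agg \<Rightarrow> 'a set) \<Rightarrow> agg \<Rightarrow> ((agg \<times> mor) \<times> 'a) set" where
  "lan_carrier Ob Y = {((X, \<phi>), a). ctd X Y \<phi> \<and> a \<in> Ob X}"

definition lan_step :: "(agg \<Rightarrow> 'a set) \<Rightarrow> (agg \<Rightarrow> agg \<Rightarrow> mor \<Rightarrow> 'a \<Rightarrow> 'a) \<Rightarrow> agg
    \<Rightarrow> (((agg \<times> mor) \<times> 'a) \<times> ((agg \<times> mor) \<times> 'a)) set" where
  "lan_step Ob Ar Y = {(((X, \<phi>), a), ((X', \<phi>'), Ar X X' \<psi> a)) | X \<phi> a X' \<phi>' \<psi>.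
      ctd X Y \<phi> \<and> ctd X' Y \<phi>' \<and> a \<in> Ob X \<and> forest X X' \<psi> \<and> mcomp X X' Y \<psi> \<phi>' = \<phi>}"

definition lan_equiv :: "(agg \<Rightarrow> 'a set) \<Rightarrow> (agg \<Rightarrow> agg \<Rightarrow> mor \<Rightarrow> 'a \<Rightarrow> 'a) \<Rightarrow> agg
    \<Rightarrow> (((agg \<times> mor) \<times> 'a) \<times> ((agg \<times> mor) \<times> 'a)) set" where
  "lan_equiv Ob Ar Y = ((lan_step Ob Ar Y \<union> (lan_step Ob Ar Y)\<inverse>)\<^sup>*) \<inter> (lan_carrier Ob Y \<times> lan_carrier Ob Y)"

definition lan :: "(agg \<Rightarrow> 'a set) \<Rightarrow> (agg \<Rightarrow> agg \<Rightarrow> mor \<Rightarrow> 'a \<Rightarrow> 'a) \<Rightarrow> agg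
    \<Rightarrow> ((agg \<times> mor) \<times> 'a) set set" where
  "lan Ob Ar Y = lan_carrier Ob Y // lan_equiv Ob Ar Y"

definition lan_class :: "(agg \<Rightarrow> 'a set) \<Rightarrow> (agg \<Rightarrow> agg \<Rightarrow> mor \<Rightarrow> 'a \<Rightarrow> 'a) \<Rightarrow> agg
    \<Rightarrow> ((agg \<times> mor) \<times> 'a) \<Rightarrow> ((agg \<times> mor) \<times> 'a) set" where
  "lan_class Ob Ar Y e = lan_equiv Ob Ar Y `` {e}"

definition lan_map :: "(agg \<Rightarrow> 'a set) \<Rightarrow> (agg \<Rightarrow> agg \<Rightarrow> mor \<Rightarrow> 'a \<Rightarrow> 'a) \<Rightarrow> agg \<Rightarrow> agg \<Rightarrow> mor
    \<Rightarrow> ((agg \<times> mor) \<times> 'a) set \<Rightarrow> ((agg \<times> mor) \<times> 'a) set" where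
  "lan_map Ob Ar Y Y' f c =
     the_elem ((\<lambda>((X, \<phi>), a). lan_class Ob Ar Y' ((X, mcomp X Y Y' \<phi> f), a)) ` c)"

definition Ostar_ob :: "agg \<Rightarrow> unit set" where "Ostar_ob X = {()}"
definition Ostar_ar :: "agg \<Rightarrow> agg \<Rightarrow> mor \<Rightarrow> unit \<Rightarrow> unit" where "Ostar_ar X X' \<psi> u = ()"

definition genus_ob :: "agg \<Rightarrow> (nat \<Rightarrow> nat) set" where
  "genus_ob X = extensional (verts X)"

definition genus_iso :: "agg \<Rightarrow> agg \<Rightarrow> mor \<Rightarrow> (nat \<Rightarrow> nat) \<Rightarrow> (nat \<Rightarrow> nat)" where
  "genus_iso X Y m g = restrict (\<lambda>w. g (the_inv_into (verts X) (vm m) w)) (verts Y)"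

definition genus_edge :: "agg \<Rightarrow> nat \<Rightarrow> nat \<Rightarrow> (nat \<Rightarrow> nat) \<Rightarrow> (nat \<Rightarrow> nat)" where
  "genus_edge X s t g = restrict (\<lambda>v. if v = bd X s then g (bd X s) + g (bd X t) else g v)
                                 (verts X - {bd X t})"

definition genus_loop :: "agg \<Rightarrow> nat \<Rightarrow> nat \<Rightarrow> (nat \<Rightarrow> nat) \<Rightarrow> (nat \<Rightarrow> nat)" where
  "genus_loop X s t g = restrict (\<lambda>v. if v = bd X s then g v + 1 else g v) (verts X)"

text \<open>Loop number b_1 = |E| - |V| + 1 of the ghost graph of phi : X -> Y
 (ghost edges = pairs of flags of X not in the image of the flag map).\<close>
definition b1 :: "agg \<Rightarrow> agg \<Rightarrow> mor \<Rightarrow> int" where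
  "b1 X Y \<phi> = int (card (flags X - fm \<phi> ` flags Y) div 2) - int (card (verts X)) + 1"

end

theory Submission
  imports Defs "HOL-Library.Nat_Bijection"
begin

definition gh :: "agg \<Rightarrow> agg \<Rightarrow> mor \<Rightarrow> nat set" where
  "gh X Y m = flags X - fm m ` flags Y"
definition gA :: "agg \<Rightarrow> agg \<Rightarrow> mor \<Rightarrow> nat \<Rightarrow> nat set" where
  "gA X Y m v = {s \<in> gh X Y m. vm m (bd X s) = v}"
definition gB :: "agg \<Rightarrow> mor \<Rightarrow> nat \<Rightarrow> nat set" where
  "gB X m v = {x \<in> verts X. vm m x = v}"
definition gR :: "agg \<Rightarrow> agg \<Rightarrow> mor \<Rightarrow> (nat \<times> nat) set" where
  "gR X Y m = {(bd X s, bd X (iv m s)) | s. s \<in> gh X Y m}"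
definition gG :: "agg \<Rightarrow> agg \<Rightarrow> mor \<Rightarrow> nat \<Rightarrow> int" where
  "gG X Y m v = int (card (gA X Y m v) div 2) - int (card (gB X m v)) + 1"

definition sem :: "agg \<Rightarrow> agg \<Rightarrow> mor \<Rightarrow> bool" where
  "sem X Y m \<longleftrightarrow> is_agg X \<and> is_agg Y \<and>
    vm m \<in> extensional (verts X) \<and> vm m ` verts X = verts Y \<and>
    fm m \<in> extensional (flags Y) \<and> inj_on (fm m) (flags Y) \<and> fm m ` flags Y \<subseteq> flags X \<and>
    (\<forall>y\<in>flags Y. vm m (bd X (fm m y)) = bd Y y) \<and>
    iv m \<in> extensional (gh X Y m) \<and>
    (\<forall>s\<in>gh X Y m. iv m s \<in> gh X Y m \<and> iv m s \<noteq> s \<and> iv m (iv m s) = s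
        \<and> vm m (bd X (iv m s)) = vm m (bd X s)) \<and>
    (\<forall>v\<in>verts Y. even (card (gA X Y m v)) \<and> gG X Y m v \<ge> 0) \<and>
    (\<forall>v\<in>verts Y. \<forall>x\<in>gB X m v. \<forall>y\<in>gB X m v. (x,y) \<in> (gR X Y m)\<^sup>*)"

lemma is_aggD:
  assumes "is_agg X"
  shows "finite (flags X)" "finite (verts X)" "\<And>f. f \<in> flags X \<Longrightarrow> bd X f \<in> verts X"
    "bd X \<in> extensional (flags X)"
  using assms unfolding is_agg_def by auto

lemma mor_eqI: "vm m = vm m' \<Longrightarrow> fm m = fm m' \<Longrightarrow> iv m = iv m' \<Longrightarrow> m = m'"
  unfolding vm_def fm_def iv_def by (cases m; cases m') auto

lemma mor_sel[simp]: "vm (a,b,c) = a" "fm (a,b,c) = b" "iv (a,b,c) = c"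
  unfolding vm_def fm_def iv_def by auto

lemma agg_sel[simp]: "flags (a,b,c) = a" "verts (a,b,c) = b" "bd (a,b,c) = c"
  unfolding flags_def verts_def bd_def by auto

lemma star_simps[simp]: "flags (star S) = S" "verts (star S) = {0}" "bd (star S) = restrict (\<lambda>_. 0) S"
  unfolding star_def by auto

lemma edge_target_simps[simp]:
  "flags (edge_target X s t) = flags X - {s, t}"
  "verts (edge_target X s t) = verts X - {bd X t}"
  "bd (edge_target X s t) = restrict (\<lambda>f. if bd X f = bd X t then bd X s else bd X f) (flags X - {s, t})"
  unfolding edge_target_def by auto

lemma loop_target_simps[simp]:
  "flags (loop_target X s t) = flags X - {s, t}"
  "verts (loop_target X s t) = verts X"
  "bd (loop_target X s t) = restrict (bd X) (flags X - {s, t})"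
  unfolding loop_target_def by auto

lemma edge_mor_simps[simp]:
  "vm (edge_mor X s t) = restrict (\<lambda>v. if v = bd X t then bd X s else v) (verts X)"
  "fm (edge_mor X s t) = restrict id (flags X - {s, t})"
  "iv (edge_mor X s t) = restrict (\<lambda>x. if x = s then t else s) {s, t}"
  unfolding edge_mor_def by auto

lemma loop_mor_simps[simp]:
  "vm (loop_mor X s t) = restrict id (verts X)"
  "fm (loop_mor X s t) = restrict id (flags X - {s, t})"
  "iv (loop_mor X s t) = restrict (\<lambda>x. if x = s then t else s) {s, t}"
  unfolding loop_mor_def by auto

lemma mcomp_simps[simp]:
  "vm (mcomp X Y Z m1 m2) = restrict (vm m2 \<circ> vm m1) (verts X)"
  "fm (mcomp X Y Z m1 m2) = restrict (fm m1 \<circ> fm m2) (flags Z)"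
  "iv (mcomp X Y Z m1 m2) = restrict (\<lambda>s. if s \<notin> fm m1 ` flags Y then iv m1 s
                     else fm m1 (iv m2 (the_inv_into (flags Y) (fm m1) s)))
               (flags X - fm m1 ` fm m2 ` flags Z)"
  unfolding mcomp_def by auto

lemma is_agg_star: "finite S \<Longrightarrow> is_agg (star S)"
  unfolding is_agg_def by auto

lemma is_agg_edge_target: "is_agg X \<Longrightarrow> edge_ok X s t \<Longrightarrow> is_agg (edge_target X s t)"
  unfolding is_agg_def edge_ok_def by auto

lemma is_agg_loop_target: "is_agg X \<Longrightarrow> is_agg (loop_target X s t)"
  unfolding is_agg_def by auto

lemma conn_single:
  assumes "x \<in> B" "B \<subseteq> {x}"
  shows "\<forall>a\<in>B. \<forall>b\<in>B. (a,b) \<in> R\<^sup>*"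
  using assms by auto

lemma sem_iso:
  assumes X: "is_agg X" and Y: "is_agg Y" and m: "iso_mor X Y m"
  shows "sem X Y m" "\<And>v. v \<in> verts Y \<Longrightarrow> gG X Y m v = 0"
    "\<And>v. v \<in> verts Y \<Longrightarrow> gB X m v = {the_inv_into (verts X) (vm m) v}"
    "gh X Y m = {}"
proof -
  obtain \<sigma>V \<sigma>F where bV: "bij_betw \<sigma>V (verts X) (verts Y)" and bF: "bij_betw \<sigma>F (flags X) (flags Y)"
    and inc: "\<forall>f\<in>flags X. bd Y (\<sigma>F f) = \<sigma>V (bd X f)"
    and meq: "m = (restrict \<sigma>V (verts X), restrict (the_inv_into (flags X) \<sigma>F) (flags Y), (\<lambda>_. undefined))"
    using m unfolding iso_mor_def by blast
  have injF: "inj_on \<sigma>F (flags X)" and imF: "\<sigma>F ` flags X = flags Y" using bF by (auto simp: bij_betw_def)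
  have injV: "inj_on \<sigma>V (verts X)" and imV: "\<sigma>V ` verts X = verts Y" using bV by (auto simp: bij_betw_def)
  have fmim: "fm m ` flags Y = flags X"
    using meq bij_betw_the_inv_into[OF bF] by (auto simp: bij_betw_def)
  show gh: "gh X Y m = {}" unfolding gh_def using fmim by auto
  have B: "gB X m v = {the_inv_into (verts X) (vm m) v}" if v: "v \<in> verts Y" for v
  proof -
    have vmX: "\<And>x. x \<in> verts X \<Longrightarrow> vm m x = \<sigma>V x" using meq by auto
    have inj2: "inj_on (vm m) (verts X)" using injV vmX by (auto simp: inj_on_def)
    have im2: "vm m ` verts X = verts Y" using imV vmX by (auto simp: image_def)
    show ?thesis unfolding gB_def using inj2 im2 v
      by (auto simp: the_inv_into_f_f the_inv_into_f_eq the_inv_into_into f_the_inv_into_f)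
  qed
  then show "\<And>v. v \<in> verts Y \<Longrightarrow> gB X m v = {the_inv_into (verts X) (vm m) v}" .
  have A: "gA X Y m v = {}" for v unfolding gA_def gh by auto
  show G0: "\<And>v. v \<in> verts Y \<Longrightarrow> gG X Y m v = 0" unfolding gG_def using A B by auto
  show "sem X Y m"
    unfolding sem_def
  proof (intro conjI)
    show "vm m \<in> extensional (verts X)" using meq by auto
    show "vm m ` verts X = verts Y" using meq imV by auto
    show "fm m \<in> extensional (flags Y)" using meq by auto
    show "inj_on (fm m) (flags Y)" using meq bij_betw_the_inv_into[OF bF]
      by (auto simp: bij_betw_def inj_on_def)
    show "fm m ` flags Y \<subseteq> flags X" using fmim by auto
    show "\<forall>y\<in>flags Y. vm m (bd X (fm m y)) = bd Y y"
    proof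
      fix y assume y: "y \<in> flags Y"
      let ?x = "the_inv_into (flags X) \<sigma>F y"
      have x: "?x \<in> flags X" using y imF injF by (auto intro: the_inv_into_into)
      have "\<sigma>F ?x = y" using y imF injF by (auto intro: f_the_inv_into_f)
      then show "vm m (bd X (fm m y)) = bd Y y" using meq x y inc is_aggD(3)[OF X x] by auto
    qed
    show "iv m \<in> extensional (gh X Y m)" using meq gh by auto
  qed (auto simp: gh A B G0 X Y)
qed


lemma sem_edge:
  assumes X: "is_agg X" and ok: "edge_ok X s t"
  shows "sem X (edge_target X s t) (edge_mor X s t)"
    "gh X (edge_target X s t) (edge_mor X s t) = {s,t}"
    "\<And>v. v \<in> verts (edge_target X s t) \<Longrightarrow> gG X (edge_target X s t) (edge_mor X s t) v = 0"
    "\<And>v. v \<in> verts (edge_target X s t) \<Longrightarrow> gB X (edge_mor X s t) v = (if v = bd X s then {bd X s, bd X t} else {v})"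
proof -
  let ?Y = "edge_target X s t" and ?m = "edge_mor X s t"
  have s: "s \<in> flags X" and t: "t \<in> flags X" and st: "bd X s \<noteq> bd X t" using ok unfolding edge_ok_def by auto
  have sneq: "s \<noteq> t" using st by auto
  have bs: "bd X s \<in> verts X" and bt: "bd X t \<in> verts X" using is_aggD(3)[OF X] s t by auto
  have fmim: "fm ?m ` flags ?Y = flags X - {s,t}" by auto
  show gh: "gh X ?Y ?m = {s,t}" unfolding gh_def using fmim s t by auto
  have A: "gA X ?Y ?m v = (if v = bd X s then {s,t} else {})" for v
    unfolding gA_def gh using bs bt st by auto
  have B: "gB X ?m v = (if v = bd X s then {bd X s, bd X t} else {v})" if "v \<in> verts ?Y" for v
    unfolding gB_def using that bs bt st by auto
  then show "\<And>v. v \<in> verts ?Y \<Longrightarrow> gB X ?m v = (if v = bd X s then {bd X s, bd X t} else {v})" .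
  have G: "gG X ?Y ?m v = 0" if "v \<in> verts ?Y" for v
    unfolding gG_def using A B[OF that] st sneq by (auto simp: card_insert_if)
  then show "\<And>v. v \<in> verts ?Y \<Longrightarrow> gG X ?Y ?m v = 0" .
  have R: "gR X ?Y ?m = {(bd X s, bd X t), (bd X t, bd X s)}"
    unfolding gR_def gh using sneq by auto
  show "sem X ?Y ?m" unfolding sem_def
  proof (intro conjI)
    show "is_agg ?Y" using is_agg_edge_target[OF X ok] .
    show "vm ?m ` verts X = verts ?Y" using bs bt st by (auto simp: image_def) 
    show "\<forall>y\<in>flags ?Y. vm ?m (bd X (fm ?m y)) = bd ?Y y" using is_aggD(3)[OF X] by auto
    show "\<forall>v\<in>verts ?Y. even (card (gA X ?Y ?m v)) \<and> 0 \<le> gG X ?Y ?m v"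
      using A G sneq by auto
    show "\<forall>v\<in>verts ?Y. \<forall>x\<in>gB X ?m v. \<forall>y\<in>gB X ?m v. (x, y) \<in> (gR X ?Y ?m)\<^sup>*"
      using B unfolding R by auto
  qed (use X gh sneq bs bt in \<open>auto simp: inj_on_def\<close>)
qed

lemma sem_loop:
  assumes X: "is_agg X" and ok: "loop_ok X s t"
  shows "sem X (loop_target X s t) (loop_mor X s t)"
    "gh X (loop_target X s t) (loop_mor X s t) = {s,t}"
    "\<And>v. v \<in> verts X \<Longrightarrow> gG X (loop_target X s t) (loop_mor X s t) v = (if v = bd X s then 1 else 0)"
    "\<And>v. v \<in> verts X \<Longrightarrow> gB X (loop_mor X s t) v = {v}"
proof -
  let ?Y = "loop_target X s t" and ?m = "loop_mor X s t"
  have s: "s \<in> flags X" and t: "t \<in> flags X" and st: "bd X s = bd X t" and sneq: "s \<noteq> t"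
    using ok unfolding loop_ok_def by auto
  have bs: "bd X s \<in> verts X" using is_aggD(3)[OF X] s by auto
  have fmim: "fm ?m ` flags ?Y = flags X - {s,t}" by auto
  show gh: "gh X ?Y ?m = {s,t}" unfolding gh_def using fmim s t by auto
  have A: "gA X ?Y ?m v = (if v = bd X s then {s,t} else {})" for v
    unfolding gA_def gh using bs st by auto
  have B: "gB X ?m v = {v}" if "v \<in> verts X" for v
    unfolding gB_def using that by auto
  then show "\<And>v. v \<in> verts X \<Longrightarrow> gB X ?m v = {v}" .
  have G: "gG X ?Y ?m v = (if v = bd X s then 1 else 0)" if "v \<in> verts X" for v
    unfolding gG_def using A B[OF that] sneq by auto
  then show "\<And>v. v \<in> verts X \<Longrightarrow> gG X ?Y ?m v = (if v = bd X s then 1 else 0)" .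
  show "sem X ?Y ?m" unfolding sem_def
  proof (intro conjI)
    show "is_agg ?Y" using is_agg_loop_target[OF X] .
    show "\<forall>y\<in>flags ?Y. vm ?m (bd X (fm ?m y)) = bd ?Y y" using is_aggD(3)[OF X] by auto
    show "\<forall>v\<in>verts ?Y. even (card (gA X ?Y ?m v)) \<and> 0 \<le> gG X ?Y ?m v"
      using A G sneq by auto
    show "\<forall>v\<in>verts ?Y. \<forall>x\<in>gB X ?m v. \<forall>y\<in>gB X ?m v. (x, y) \<in> (gR X ?Y ?m)\<^sup>*"
      using B by auto
  qed (use X gh sneq bs st in \<open>auto simp: inj_on_def\<close>)
qed


lemma semD:
  assumes "sem X Y m"
  shows "is_agg X" "is_agg Y" "vm m \<in> extensional (verts X)" "vm m ` verts X = verts Y"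
    "fm m \<in> extensional (flags Y)" "inj_on (fm m) (flags Y)" "fm m ` flags Y \<subseteq> flags X"
    "\<And>y. y \<in> flags Y \<Longrightarrow> vm m (bd X (fm m y)) = bd Y y"
    "iv m \<in> extensional (gh X Y m)"
    "\<And>s. s \<in> gh X Y m \<Longrightarrow> iv m s \<in> gh X Y m"
    "\<And>s. s \<in> gh X Y m \<Longrightarrow> iv m s \<noteq> s"
    "\<And>s. s \<in> gh X Y m \<Longrightarrow> iv m (iv m s) = s"
    "\<And>s. s \<in> gh X Y m \<Longrightarrow> vm m (bd X (iv m s)) = vm m (bd X s)"
    "\<And>v. v \<in> verts Y \<Longrightarrow> even (card (gA X Y m v))"
    "\<And>v. v \<in> verts Y \<Longrightarrow> gG X Y m v \<ge> 0"
    "\<And>v x y. v \<in> verts Y \<Longrightarrow> x \<in> gB X m v \<Longrightarrow> y \<in> gB X m v \<Longrightarrow> (x,y) \<in> (gR X Y m)\<^sup>*"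
  using assms unfolding sem_def by blast+

lemma gh_sub: "gh X Y m \<subseteq> flags X" unfolding gh_def by auto
lemma gA_sub: "gA X Y m v \<subseteq> gh X Y m" unfolding gA_def by auto
lemma gB_sub: "gB X m v \<subseteq> verts X" unfolding gB_def by auto

lemma gh_finite: "is_agg X \<Longrightarrow> finite (gh X Y m)"
  using is_aggD(1) gh_sub finite_subset by metis
lemma gA_finite: "is_agg X \<Longrightarrow> finite (gA X Y m v)"
  using gh_finite gA_sub finite_subset by metis
lemma gB_finite: "is_agg X \<Longrightarrow> finite (gB X m v)"
  using is_aggD(2) gB_sub finite_subset by metis

lemma gB_nonempty: assumes "sem X Y m" "v \<in> verts Y" shows "gB X m v \<noteq> {}"
proof -
  have "v \<in> vm m ` verts X" using semD(4)[OF assms(1)] assms(2) by simp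
  then obtain x where "x \<in> verts X" "vm m x = v" by blast
  then show ?thesis unfolding gB_def by blast
qed

locale comp2 =
  fixes X Y Z m1 m2
  assumes s1: "sem X Y m1" and s2: "sem Y Z m2"
begin

abbreviation "mc \<equiv> mcomp X Y Z m1 m2"

lemma c_vm: "x \<in> verts X \<Longrightarrow> vm mc x = vm m2 (vm m1 x)" by simp

lemma c_fm: "z \<in> flags Z \<Longrightarrow> fm mc z = fm m1 (fm m2 z)" by simp

lemma c_fmim: "fm mc ` flags Z = fm m1 ` fm m2 ` flags Z"
proof -
  have "fm mc ` flags Z = (\<lambda>z. fm m1 (fm m2 z)) ` flags Z"
    by (rule image_cong) simp_all
  then show ?thesis by (simp add: image_image)
qed

lemma c_gh: "gh X Z mc = gh X Y m1 \<union> fm m1 ` gh Y Z m2"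
proof -
  have "fm m1 ` (flags Y - fm m2 ` flags Z) = fm m1 ` flags Y - fm m1 ` fm m2 ` flags Z"
    using semD(6)[OF s1] semD(7)[OF s2] by (intro inj_on_image_set_diff) auto
  then show ?thesis unfolding gh_def c_fmim using semD(7)[OF s1] semD(7)[OF s2] by auto
qed

lemma c_disj: "gh X Y m1 \<inter> fm m1 ` gh Y Z m2 = {}"
  unfolding gh_def by auto

lemma c_iv1: assumes "s \<in> gh X Y m1" shows "iv mc s = iv m1 s"
proof -
  have "s \<in> flags X - fm m1 ` fm m2 ` flags Z" "s \<notin> fm m1 ` flags Y"
    using assms semD(7)[OF s2] unfolding gh_def by auto
  then show ?thesis by simp
qed

lemma c_iv2: "y \<in> gh Y Z m2 \<Longrightarrow> iv mc (fm m1 y) = fm m1 (iv m2 y)"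
proof -
  assume y: "y \<in> gh Y Z m2"
  have yY: "y \<in> flags Y" using y unfolding gh_def by auto
  have "fm m1 y \<in> gh X Z mc" using c_gh y by auto
  then have "fm m1 y \<in> flags X - fm m1 ` fm m2 ` flags Z" unfolding gh_def c_fmim .
  moreover have "the_inv_into (flags Y) (fm m1) (fm m1 y) = y"
    using the_inv_into_f_f[OF semD(6)[OF s1] yY] .
  ultimately show ?thesis using yY by auto
qed

lemma c_gB: "z \<in> verts Z \<Longrightarrow> gB X mc z = (\<Union>w\<in>gB Y m2 z. gB X m1 w)"
  using semD(4)[OF s1] unfolding gB_def by auto

lemma c_gA: "z \<in> verts Z \<Longrightarrow> gA X Z mc z = (\<Union>w\<in>gB Y m2 z. gA X Y m1 w) \<union> fm m1 ` gA Y Z m2 z"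
proof -
  assume z: "z \<in> verts Z"
  have X: "is_agg X" using semD(1)[OF s1] .
  have "s \<in> gA X Z mc z \<longleftrightarrow> s \<in> (\<Union>w\<in>gB Y m2 z. gA X Y m1 w) \<union> fm m1 ` gA Y Z m2 z" for s
  proof
    assume s: "s \<in> gA X Z mc z"
    then have sg: "s \<in> gh X Z mc" and sv: "vm mc (bd X s) = z" unfolding gA_def by auto
    have sX: "s \<in> flags X" using sg unfolding gh_def by auto
    have bX: "bd X s \<in> verts X" using is_aggD(3)[OF X sX] .
    show "s \<in> (\<Union>w\<in>gB Y m2 z. gA X Y m1 w) \<union> fm m1 ` gA Y Z m2 z"
    proof (cases "s \<in> gh X Y m1")
      case True
      then show ?thesis using sv bX semD(4)[OF s1]
        unfolding gA_def gB_def by auto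
    next
      case False
      then obtain y where y: "y \<in> gh Y Z m2" and sy: "s = fm m1 y" using sg c_gh by auto
      have "y \<in> flags Y" using y unfolding gh_def by auto
      then have "vm m2 (bd Y y) = z" using sv sy bX semD(8)[OF s1, of y] by auto
      then show ?thesis using y sy unfolding gA_def by auto
    qed
  next
    assume s: "s \<in> (\<Union>w\<in>gB Y m2 z. gA X Y m1 w) \<union> fm m1 ` gA Y Z m2 z"
    then show "s \<in> gA X Z mc z"
    proof
      assume "s \<in> (\<Union>w\<in>gB Y m2 z. gA X Y m1 w)"
      then obtain w where w: "w \<in> gB Y m2 z" "s \<in> gA X Y m1 w" by blast
      have sg: "s \<in> gh X Y m1" and sw: "vm m1 (bd X s) = w" using w(2) unfolding gA_def by auto
      have sX: "s \<in> flags X" using sg unfolding gh_def by auto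
      have "vm mc (bd X s) = z" using sw w(1) is_aggD(3)[OF X sX] unfolding gB_def by auto
      then show ?thesis using c_gh sg unfolding gA_def by auto
    next
      assume "s \<in> fm m1 ` gA Y Z m2 z"
      then obtain y where y: "y \<in> gh Y Z m2" "vm m2 (bd Y y) = z" and sy: "s = fm m1 y"
        unfolding gA_def by auto
      have yY: "y \<in> flags Y" using y unfolding gh_def by auto
      have sX: "s \<in> flags X" using sy yY semD(7)[OF s1] by auto
      show ?thesis using c_gh y sy sX is_aggD(3)[OF X sX] semD(8)[OF s1 yY] unfolding gA_def by auto
    qed
  qed
  then show ?thesis by blast
qed

lemma c_cardB: "z \<in> verts Z \<Longrightarrow> card (gB X mc z) = (\<Sum>w\<in>gB Y m2 z. card (gB X m1 w))"
  unfolding c_gB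
  by (rule card_UN_disjoint) (use gB_finite semD(1)[OF s1] semD(1)[OF s2] in \<open>auto simp: gB_def\<close>)

lemma c_cardA: "z \<in> verts Z \<Longrightarrow>
   card (gA X Z mc z) = (\<Sum>w\<in>gB Y m2 z. card (gA X Y m1 w)) + card (gA Y Z m2 z)"
proof -
  assume z: "z \<in> verts Z"
  have X: "is_agg X" and Y: "is_agg Y" using semD(1)[OF s1] semD(1)[OF s2] .
  have c1: "card (\<Union>w\<in>gB Y m2 z. gA X Y m1 w) = (\<Sum>w\<in>gB Y m2 z. card (gA X Y m1 w))"
    by (rule card_UN_disjoint) (use gA_finite gB_finite X Y in \<open>auto simp: gA_def\<close>)
  have c2: "card (fm m1 ` gA Y Z m2 z) = card (gA Y Z m2 z)"
    by (rule card_image, rule inj_on_subset[OF semD(6)[OF s1]]) (use gA_sub gh_sub in blast)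
  have d: "(\<Union>w\<in>gB Y m2 z. gA X Y m1 w) \<inter> fm m1 ` gA Y Z m2 z = {}"
    using c_disj gA_sub by blast
  show ?thesis unfolding c_gA[OF z]
    by (subst card_Un_disjoint) (use d c1 c2 gA_finite X Y gB_finite in \<open>auto intro!: finite_imageI\<close>)
qed

lemma c_even: "z \<in> verts Z \<Longrightarrow> even (card (gA X Z mc z))"
proof -
  assume z: "z \<in> verts Z"
  have "\<forall>w\<in>gB Y m2 z. even (card (gA X Y m1 w))" using semD(14)[OF s1] gB_sub by blast
  then have "even (\<Sum>w\<in>gB Y m2 z. card (gA X Y m1 w))" by (intro dvd_sum) auto
  then show ?thesis using c_cardA[OF z] semD(14)[OF s2 z] by simp
qed

lemma c_G: "z \<in> verts Z \<Longrightarrow> gG X Z mc z = (\<Sum>w\<in>gB Y m2 z. gG X Y m1 w) + gG Y Z m2 z"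
proof -
  assume z: "z \<in> verts Z"
  let ?B2 = "gB Y m2 z"
  have ev: "\<forall>w\<in>?B2. even (card (gA X Y m1 w))" using semD(14)[OF s1] gB_sub by blast
  define T where "T = (\<Sum>w\<in>?B2. card (gA X Y m1 w) div 2)"
  have e1: "(\<Sum>w\<in>?B2. card (gA X Y m1 w)) = 2 * T"
    unfolding T_def sum_distrib_left by (rule sum.cong) (use ev in auto)
  obtain k where k: "card (gA Y Z m2 z) = 2 * k" using semD(14)[OF s2 z] by (auto elim: evenE)
  have cA: "card (gA X Z mc z) = 2 * T + 2 * k" using c_cardA[OF z] e1 k by simp
  have d1: "card (gA X Z mc z) div 2 = T + k" unfolding cA by simp
  have d2: "card (gA Y Z m2 z) div 2 = k" unfolding k by simp
  have cB: "int (card (gB X mc z)) = (\<Sum>w\<in>?B2. int (card (gB X m1 w)))"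
    using c_cardB[OF z] by simp
  have s1': "(\<Sum>w\<in>?B2. gG X Y m1 w) = (\<Sum>w\<in>?B2. int (card (gA X Y m1 w) div 2))
        - (\<Sum>w\<in>?B2. int (card (gB X m1 w))) + int (card ?B2)"
    unfolding gG_def by (simp add: sum.distrib sum_subtractf)
  have iT: "int T = (\<Sum>w\<in>?B2. int (card (gA X Y m1 w) div 2))" unfolding T_def by simp
  have g1: "gG X Z mc z = int T + int k - int (card (gB X mc z)) + 1" unfolding gG_def d1 by simp
  have g2: "gG Y Z m2 z = int k - int (card ?B2) + 1" unfolding gG_def d2 by simp
  show ?thesis unfolding g1 g2 s1' cB iT by linarith
qed

end

lemma gR_I: "s \<in> gh X Y m \<Longrightarrow> (bd X s, bd X (iv m s)) \<in> gR X Y m"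
  unfolding gR_def by blast

context comp2 begin

lemma c_R1: "gR X Y m1 \<subseteq> gR X Z mc"
proof
  fix p assume "p \<in> gR X Y m1"
  then obtain s where s: "s \<in> gh X Y m1" "p = (bd X s, bd X (iv m1 s))" unfolding gR_def by auto
  then have "s \<in> gh X Z mc" unfolding c_gh by blast
  from gR_I[OF this] show "p \<in> gR X Z mc" unfolding s(2) c_iv1[OF s(1)] .
qed

lemma c_R2: "y0 \<in> gh Y Z m2 \<Longrightarrow> (bd X (fm m1 y0), bd X (fm m1 (iv m2 y0))) \<in> gR X Z mc"
proof -
  assume y0: "y0 \<in> gh Y Z m2"
  then have "fm m1 y0 \<in> gh X Z mc" unfolding c_gh by blast
  from gR_I[OF this] show ?thesis unfolding c_iv2[OF y0] .
qed

lemma c_conn_aux: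
  assumes "(w, w') \<in> (gR Y Z m2)\<^sup>*"
  shows "\<And>x y. x \<in> verts X \<Longrightarrow> vm m1 x = w \<Longrightarrow> y \<in> verts X \<Longrightarrow> vm m1 y = w'
      \<Longrightarrow> (x,y) \<in> (gR X Z mc)\<^sup>*"
  using assms
proof (induction arbitrary: rule: rtrancl_induct)
  case base
  have "w \<in> verts Y" using base(1,2) semD(4)[OF s1] by auto
  then have "(x,y) \<in> (gR X Y m1)\<^sup>*" using semD(16)[OF s1, of w x y] base unfolding gB_def by auto
  then show ?case using rtrancl_mono[OF c_R1] by auto
next
  case (step u w')
  obtain y0 where y0: "y0 \<in> gh Y Z m2" and u: "u = bd Y y0" and w': "w' = bd Y (iv m2 y0)"
    using step(2) unfolding gR_def by auto
  have y0Y: "y0 \<in> flags Y" using y0 unfolding gh_def by auto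
  have i0: "iv m2 y0 \<in> gh Y Z m2" using semD(10)[OF s2 y0] .
  have i0Y: "iv m2 y0 \<in> flags Y" using i0 unfolding gh_def by auto
  have X: "is_agg X" using semD(1)[OF s1] .
  let ?p = "bd X (fm m1 y0)" and ?q = "bd X (fm m1 (iv m2 y0))"
  have pX: "?p \<in> verts X" using is_aggD(3)[OF X] semD(7)[OF s1] y0Y by auto
  have qX: "?q \<in> verts X" using is_aggD(3)[OF X] semD(7)[OF s1] i0Y by auto
  have pu: "vm m1 ?p = u" using semD(8)[OF s1 y0Y] u by simp
  have qw: "vm m1 ?q = w'" using semD(8)[OF s1 i0Y] w' by simp
  have 1: "(x, ?p) \<in> (gR X Z mc)\<^sup>*" using step.IH[OF step.prems(1,2) pX pu] .
  have 2: "(?p, ?q) \<in> gR X Z mc" using c_R2[OF y0] .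
  have "w' \<in> verts Y" using qw qX semD(4)[OF s1] by auto
  then have "(?q, y) \<in> (gR X Y m1)\<^sup>*" using semD(16)[OF s1, of w' ?q y] qX qw step.prems(3,4)
    unfolding gB_def by auto
  then have 3: "(?q, y) \<in> (gR X Z mc)\<^sup>*" using rtrancl_mono[OF c_R1] by auto
  show ?case using 1 2 3 by (meson rtrancl_into_rtrancl rtrancl_trans)
qed

lemma c_conn: "z \<in> verts Z \<Longrightarrow> x \<in> gB X mc z \<Longrightarrow> y \<in> gB X mc z \<Longrightarrow> (x,y) \<in> (gR X Z mc)\<^sup>*"
proof -
  assume z: "z \<in> verts Z" and x: "x \<in> gB X mc z" and y: "y \<in> gB X mc z"
  obtain wx where wx: "wx \<in> gB Y m2 z" "x \<in> gB X m1 wx" using x c_gB[OF z] by auto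
  obtain wy where wy: "wy \<in> gB Y m2 z" "y \<in> gB X m1 wy" using y c_gB[OF z] by auto
  have "(wx, wy) \<in> (gR Y Z m2)\<^sup>*" using semD(16)[OF s2 z wx(1) wy(1)] .
  then show ?thesis using c_conn_aux wx(2) wy(2) unfolding gB_def by auto
qed

lemma c_sem: "sem X Z mc"
proof -
  have X: "is_agg X" and Y: "is_agg Y" and Z: "is_agg Z" using semD(1,2)[OF s1] semD(2)[OF s2] by auto
  have ghc: "flags X - fm m1 ` fm m2 ` flags Z = gh X Z mc" unfolding gh_def c_fmim ..
  show ?thesis unfolding sem_def
  proof (intro conjI)
    show "vm mc ` verts X = verts Z"
    proof -
      have "vm mc ` verts X = vm m2 ` vm m1 ` verts X" by (auto simp: image_iff)
      then show ?thesis using semD(4)[OF s1] semD(4)[OF s2] by simp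
    qed
    show "inj_on (fm mc) (flags Z)"
    proof (rule inj_onI)
      fix a b assume a: "a \<in> flags Z" and b: "b \<in> flags Z" and e: "fm mc a = fm mc b"
      have "fm m1 (fm m2 a) = fm m1 (fm m2 b)" using e a b by simp
      then have "fm m2 a = fm m2 b" using semD(6)[OF s1] semD(7)[OF s2] a b by (auto dest: inj_onD)
      then show "a = b" using semD(6)[OF s2] a b by (auto dest: inj_onD)
    qed
    show "fm mc ` flags Z \<subseteq> flags X" using semD(7)[OF s1] semD(7)[OF s2] by auto
    show "\<forall>y\<in>flags Z. vm mc (bd X (fm mc y)) = bd Z y"
    proof
      fix y assume y: "y \<in> flags Z"
      have yY: "fm m2 y \<in> flags Y" using y semD(7)[OF s2] by auto
      have "fm m1 (fm m2 y) \<in> flags X" using yY semD(7)[OF s1] by auto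
      then have "bd X (fm m1 (fm m2 y)) \<in> verts X" using is_aggD(3)[OF X] by auto
      then show "vm mc (bd X (fm mc y)) = bd Z y"
        using y semD(8)[OF s1 yY] semD(8)[OF s2 y] by simp
    qed
    show "iv mc \<in> extensional (gh X Z mc)" unfolding mcomp_simps ghc by simp
    show "\<forall>s\<in>gh X Z mc. iv mc s \<in> gh X Z mc \<and> iv mc s \<noteq> s \<and> iv mc (iv mc s) = s
        \<and> vm mc (bd X (iv mc s)) = vm mc (bd X s)"
    proof
      fix s assume s: "s \<in> gh X Z mc"
      show "iv mc s \<in> gh X Z mc \<and> iv mc s \<noteq> s \<and> iv mc (iv mc s) = s
        \<and> vm mc (bd X (iv mc s)) = vm mc (bd X s)"
      proof (cases "s \<in> gh X Y m1")
        case True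
        have i: "iv m1 s \<in> gh X Y m1" using semD(10)[OF s1 True] .
        have sX: "s \<in> flags X" and iX: "iv m1 s \<in> flags X" using True i unfolding gh_def by auto
        show ?thesis using c_iv1[OF True] c_iv1[OF i] semD(11,12,13)[OF s1 True] i c_gh
          is_aggD(3)[OF X sX] is_aggD(3)[OF X iX] by auto
      next
        case False
        then obtain y where y: "y \<in> gh Y Z m2" and sy: "s = fm m1 y" using s c_gh by auto
        have i: "iv m2 y \<in> gh Y Z m2" using semD(10)[OF s2 y] .
        have yY: "y \<in> flags Y" and iY: "iv m2 y \<in> flags Y" using y i unfolding gh_def by auto
        have ne: "fm m1 (iv m2 y) \<noteq> fm m1 y"
          using semD(11)[OF s2 y] semD(6)[OF s1] yY iY by (auto dest: inj_onD)
        have f1: "fm m1 y \<in> flags X" and f2: "fm m1 (iv m2 y) \<in> flags X" using yY iY semD(7)[OF s1] by auto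
        have "vm mc (bd X (fm m1 (iv m2 y))) = vm m2 (bd Y (iv m2 y))"
          using is_aggD(3)[OF X f2] semD(8)[OF s1 iY] by simp
        also have "\<dots> = vm m2 (bd Y y)" using semD(13)[OF s2 y] .
        also have "\<dots> = vm mc (bd X (fm m1 y))"
          using is_aggD(3)[OF X f1] semD(8)[OF s1 yY] by simp
        finally show ?thesis unfolding sy using c_iv2[OF y] c_iv2[OF i] semD(12)[OF s2 y] i c_gh ne by auto
      qed
    qed
    show "\<forall>v\<in>verts Z. even (card (gA X Z mc v)) \<and> 0 \<le> gG X Z mc v"
    proof
      fix z assume z: "z \<in> verts Z"
      have "0 \<le> (\<Sum>w\<in>gB Y m2 z. gG X Y m1 w)"
        by (rule sum_nonneg) (use semD(15)[OF s1] gB_sub in blast)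
      then show "even (card (gA X Z mc z)) \<and> 0 \<le> gG X Z mc z"
        using c_even[OF z] c_G[OF z] semD(15)[OF s2 z] by simp
    qed
    show "\<forall>v\<in>verts Z. \<forall>x\<in>gB X mc v. \<forall>y\<in>gB X mc v. (x, y) \<in> (gR X Z mc)\<^sup>*"
      using c_conn by blast
  qed (use X Z in auto)
qed

end

lemma ctd_sem: "ctd X Y m \<Longrightarrow> sem X Y m"
proof (induction rule: ctd.induct)
  case (ctd_iso X Y m) then show ?case using sem_iso by blast
next
  case (ctd_edge X s t) then show ?case using sem_edge by blast
next
  case (ctd_loop X s t) then show ?case using sem_loop by blast
next
  case (ctd_comp X Y m1 Z m2) then show ?case using comp2.c_sem comp2.intro by blast
qed

lemma forest_sem: "forest X Y m \<Longrightarrow> sem X Y m \<and> (\<forall>v\<in>verts Y. gG X Y m v = 0)"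
proof (induction rule: forest.induct)
  case (forest_iso X Y m) then show ?case using sem_iso by blast
next
  case (forest_edge X s t) then show ?case using sem_edge by blast
next
  case (forest_comp X Y m1 Z m2)
  then have c: "comp2 X Y Z m1 m2" by (intro comp2.intro) auto
  have "gG X Z (mcomp X Y Z m1 m2) v = 0" if v: "v \<in> verts Z" for v
  proof -
    have "(\<Sum>w\<in>gB Y m2 v. gG X Y m1 w) = 0"
      by (rule sum.neutral) (use forest_comp gB_sub in blast)
    then show ?thesis using comp2.c_G[OF c v] forest_comp v by simp
  qed
  then show ?case using comp2.c_sem[OF c] by blast
qed

lemma ctd_is_agg: "ctd X Y m \<Longrightarrow> is_agg X \<and> is_agg Y"
  using ctd_sem semD(1,2) by blast


lemma gh_fm_eq: "fm m = fm m' \<Longrightarrow> gh X Y m = gh X Y m'"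
  unfolding gh_def by simp

lemma mcomp_assoc:
  assumes s1: "sem W X m1" and s2: "sem X Y m2" and s3: "sem Y Z m3"
  shows "mcomp W Y Z (mcomp W X Y m1 m2) m3 = mcomp W X Z m1 (mcomp X Y Z m2 m3)"
    (is "?L = ?R")
proof -
  let ?m12 = "mcomp W X Y m1 m2" and ?m23 = "mcomp X Y Z m2 m3"
  have c12: "comp2 W X Y m1 m2" using s1 s2 by (rule comp2.intro)
  have c23: "comp2 X Y Z m2 m3" using s2 s3 by (rule comp2.intro)
  have s12: "sem W Y ?m12" using comp2.c_sem[OF c12] .
  have s23: "sem X Z ?m23" using comp2.c_sem[OF c23] .
  have cL: "comp2 W Y Z ?m12 m3" using s12 s3 by (rule comp2.intro)
  have cR: "comp2 W X Z m1 ?m23" using s1 s23 by (rule comp2.intro)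
  have vmeq: "vm ?L = vm ?R"
  proof
    fix w show "vm ?L w = vm ?R w"
      using semD(4)[OF s1] by (cases "w \<in> verts W") auto
  qed
  have fmeq: "fm ?L = fm ?R"
  proof
    fix z show "fm ?L z = fm ?R z"
      using semD(7)[OF s3] by (cases "z \<in> flags Z") auto
  qed
  have gheq: "gh W Z ?L = gh W Z ?R" by (rule gh_fm_eq[OF fmeq])
  have ivL: "iv ?L \<in> extensional (gh W Z ?L)" using semD(9)[OF comp2.c_sem[OF cL]] .
  have ivR: "iv ?R \<in> extensional (gh W Z ?R)" using semD(9)[OF comp2.c_sem[OF cR]] .
  have iveq: "iv ?L = iv ?R"
  proof
    fix s show "iv ?L s = iv ?R s"
    proof (cases "s \<in> gh W Z ?R")
      case False
      then show ?thesis using ivL ivR gheq by (simp add: extensional_def)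
    next
      case True
      have ghR: "gh W Z ?R = gh W X m1 \<union> fm m1 ` gh X Z ?m23" using comp2.c_gh[OF cR] .
      have gh23: "gh X Z ?m23 = gh X Y m2 \<union> fm m2 ` gh Y Z m3" using comp2.c_gh[OF c23] .
      have gh12: "gh W Y ?m12 = gh W X m1 \<union> fm m1 ` gh X Y m2" using comp2.c_gh[OF c12] .
      show ?thesis
      proof (cases "s \<in> gh W X m1")
        case s1': True
        have "s \<in> gh W Y ?m12" using s1' gh12 by blast
        then show ?thesis using comp2.c_iv1[OF cL] comp2.c_iv1[OF cR s1'] comp2.c_iv1[OF c12 s1'] by simp
      next
        case False
        then obtain x where x: "x \<in> gh X Z ?m23" and sx: "s = fm m1 x" using True ghR by blast
        have xX: "x \<in> flags X" using x unfolding gh_def by blast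
        show ?thesis
        proof (cases "x \<in> gh X Y m2")
          case x2: True
          have "s \<in> gh W Y ?m12" using x2 sx gh12 by blast
          then have "iv ?L s = iv ?m12 s" using comp2.c_iv1[OF cL] by simp
          also have "\<dots> = fm m1 (iv m2 x)" using comp2.c_iv2[OF c12 x2] sx by simp
          also have "\<dots> = fm m1 (iv ?m23 x)" using comp2.c_iv1[OF c23 x2] by simp
          also have "\<dots> = iv ?R s" using comp2.c_iv2[OF cR x] sx by simp
          finally show ?thesis .
        next
          case False
          then obtain y where y: "y \<in> gh Y Z m3" and xy: "x = fm m2 y" using x gh23 by blast
          have yY: "y \<in> flags Y" using y unfolding gh_def by blast
          have iyY: "iv m3 y \<in> flags Y" using semD(10)[OF s3 y] unfolding gh_def by blast
          have sy: "s = fm ?m12 y" using sx xy yY by simp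
          have "iv ?L s = fm ?m12 (iv m3 y)" using comp2.c_iv2[OF cL y] sy by simp
          also have "\<dots> = fm m1 (fm m2 (iv m3 y))" using iyY by simp
          also have "\<dots> = fm m1 (iv ?m23 x)" using comp2.c_iv2[OF c23 y] xy by simp
          also have "\<dots> = iv ?R s" using comp2.c_iv2[OF cR x] sx by simp
          finally show ?thesis .
        qed
      qed
    qed
  qed
  show ?thesis using vmeq fmeq iveq by (rule mor_eqI)
qed


lemma rtrancl_map_lemma:
  assumes "(a,b) \<in> R\<^sup>*" and "\<And>p q. (p,q) \<in> R \<Longrightarrow> (\<mu> p, \<mu> q) \<in> S\<^sup>*"
  shows "(\<mu> a, \<mu> b) \<in> S\<^sup>*"
  using assms(1)
proof (induction rule: rtrancl_induct)
  case base then show ?case by simp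
next
  case (step y z) then show ?case using assms(2) rtrancl_trans by metis
qed


lemma gR_E: "(p,q) \<in> gR X Y m \<Longrightarrow> (\<And>s. s \<in> gh X Y m \<Longrightarrow> p = bd X s \<Longrightarrow> q = bd X (iv m s) \<Longrightarrow> P) \<Longrightarrow> P"
  unfolding gR_def by blast

definition red_mor :: "agg \<Rightarrow> agg \<Rightarrow> mor \<Rightarrow> agg \<Rightarrow> nat \<Rightarrow> nat \<Rightarrow> mor" where
  "red_mor X Y \<phi> X1 s t = (restrict (vm \<phi>) (verts X1), fm \<phi>, restrict (iv \<phi>) (gh X Y \<phi> - {s,t}))"

lemma red_mor_simps[simp]:
  "vm (red_mor X Y \<phi> X1 s t) = restrict (vm \<phi>) (verts X1)"
  "fm (red_mor X Y \<phi> X1 s t) = fm \<phi>"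
  "iv (red_mor X Y \<phi> X1 s t) = restrict (iv \<phi>) (gh X Y \<phi> - {s,t})"
  unfolding red_mor_def by auto

locale red =
  fixes X Y \<phi> s t
  assumes S: "sem X Y \<phi>" and sg: "s \<in> gh X Y \<phi>" and tdef: "t = iv \<phi> s"
begin

lemma tg: "t \<in> gh X Y \<phi>" using semD(10)[OF S sg] tdef by simp
lemma st: "s \<noteq> t" using semD(11)[OF S sg] tdef by simp
lemma ts: "iv \<phi> t = s" using semD(12)[OF S sg] tdef by simp
lemma sX: "s \<in> flags X" using sg unfolding gh_def by blast
lemma tX: "t \<in> flags X" using tg unfolding gh_def by blast
lemma X: "is_agg X" using semD(1)[OF S] .
lemma bsX: "bd X s \<in> verts X" using is_aggD(3)[OF X sX] .
lemma btX: "bd X t \<in> verts X" using is_aggD(3)[OF X tX] .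
lemma vmst: "vm \<phi> (bd X t) = vm \<phi> (bd X s)" using semD(13)[OF S sg] tdef by simp
lemma fm_not_st: "y \<in> flags Y \<Longrightarrow> fm \<phi> y \<noteq> s \<and> fm \<phi> y \<noteq> t"
  using sg tg unfolding gh_def by blast
lemma iv_not_st: "s' \<in> gh X Y \<phi> - {s,t} \<Longrightarrow> iv \<phi> s' \<in> gh X Y \<phi> - {s,t}"
proof -
  assume a: "s' \<in> gh X Y \<phi> - {s,t}"
  have "iv \<phi> s' \<noteq> s"
  proof
    assume "iv \<phi> s' = s"
    then have "iv \<phi> (iv \<phi> s') = t" using tdef by simp
    then show False using semD(12)[OF S, of s'] a by auto
  qed
  moreover have "iv \<phi> s' \<noteq> t"
  proof
    assume "iv \<phi> s' = t"
    then have "iv \<phi> (iv \<phi> s') = s" using ts by simp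
    then show False using semD(12)[OF S, of s'] a by auto
  qed
  ultimately show ?thesis using semD(10)[OF S, of s'] a by blast
qed

lemma ivext: "iv \<phi> \<in> extensional (gh X Y \<phi>)" using semD(9)[OF S] .

end

locale red_edge = red +
  assumes ne: "bd X s \<noteq> bd X t"
begin

abbreviation "X1 \<equiv> edge_target X s t"
abbreviation "\<phi>1 \<equiv> red_mor X Y \<phi> X1 s t"
abbreviation "\<mu> \<equiv> (\<lambda>v. if v = bd X t then bd X s else v)"

lemma eok: "edge_ok X s t" unfolding edge_ok_def using sX tX ne by blast

lemma X1: "is_agg X1" using is_agg_edge_target[OF X eok] .

lemma mu_vm: "a \<in> verts X \<Longrightarrow> vm \<phi> (\<mu> a) = vm \<phi> a" using vmst by simp
lemma mu_in: "a \<in> verts X \<Longrightarrow> \<mu> a \<in> verts X1" using bsX ne by simp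
lemma bd1: "f \<in> flags X1 \<Longrightarrow> bd X1 f = \<mu> (bd X f)" by simp

lemma gh1: "gh X1 Y \<phi>1 = gh X Y \<phi> - {s,t}" unfolding gh_def by auto

lemma vm1: "a \<in> verts X \<Longrightarrow> vm \<phi>1 (\<mu> a) = vm \<phi> a" using mu_in mu_vm by simp

lemma f1_vm: "f \<in> flags X1 \<Longrightarrow> vm \<phi>1 (bd X1 f) = vm \<phi> (bd X f)"
  using vm1 is_aggD(3)[OF X] by simp

lemma gA1: "gA X1 Y \<phi>1 v = gA X Y \<phi> v - {s,t}"
proof -
  have "s' \<in> gA X1 Y \<phi>1 v \<longleftrightarrow> s' \<in> gA X Y \<phi> v - {s,t}" for s'
  proof (cases "s' \<in> gh X Y \<phi> - {s,t}")
    case True then have "s' \<in> flags X1" unfolding gh_def by auto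
    from f1_vm[OF this] True show ?thesis unfolding gA_def gh1 by simp
  next
    case False then show ?thesis unfolding gA_def gh1 by blast
  qed
  then show ?thesis by blast
qed

lemma gB1: "gB X1 \<phi>1 v = gB X \<phi> v - {bd X t}"
  unfolding gB_def by auto

lemma sem1: "sem X1 Y \<phi>1"
  unfolding sem_def
proof (intro conjI)
  show "is_agg X1" using X1 .
  show "is_agg Y" using semD(2)[OF S] .
  show "vm \<phi>1 \<in> extensional (verts X1)" by simp
  show "vm \<phi>1 ` verts X1 = verts Y"
  proof -
    have "vm \<phi>1 ` verts X1 = vm \<phi> ` (verts X - {bd X t})" by (auto simp: image_iff)
    also have "\<dots> = vm \<phi> ` verts X"
    proof
      show "vm \<phi> ` verts X \<subseteq> vm \<phi> ` (verts X - {bd X t})"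
      proof
        fix y assume "y \<in> vm \<phi> ` verts X"
        then obtain a where a: "a \<in> verts X" "y = vm \<phi> a" by blast
        show "y \<in> vm \<phi> ` (verts X - {bd X t})"
        proof (cases "a = bd X t")
          case True then show ?thesis using a vmst bsX ne by (auto intro!: image_eqI[of _ _ "bd X s"])
        next
          case False then show ?thesis using a by blast
        qed
      qed
    qed auto
    finally show ?thesis using semD(4)[OF S] by simp
  qed
  show "fm \<phi>1 \<in> extensional (flags Y)" using semD(5)[OF S] by simp
  show "inj_on (fm \<phi>1) (flags Y)" using semD(6)[OF S] by simp
  show "fm \<phi>1 ` flags Y \<subseteq> flags X1" using semD(7)[OF S] fm_not_st by auto
  show "\<forall>y\<in>flags Y. vm \<phi>1 (bd X1 (fm \<phi>1 y)) = bd Y y"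
  proof
    fix y assume y: "y \<in> flags Y"
    have "fm \<phi> y \<in> flags X1" using semD(7)[OF S] fm_not_st y by auto
    then show "vm \<phi>1 (bd X1 (fm \<phi>1 y)) = bd Y y" using f1_vm semD(8)[OF S y] by simp
  qed
  show "iv \<phi>1 \<in> extensional (gh X1 Y \<phi>1)" unfolding gh1 by simp
  show "\<forall>s'\<in>gh X1 Y \<phi>1. iv \<phi>1 s' \<in> gh X1 Y \<phi>1 \<and> iv \<phi>1 s' \<noteq> s' \<and> iv \<phi>1 (iv \<phi>1 s') = s'
      \<and> vm \<phi>1 (bd X1 (iv \<phi>1 s')) = vm \<phi>1 (bd X1 s')"
  proof
    fix s' assume a: "s' \<in> gh X1 Y \<phi>1"
    then have a': "s' \<in> gh X Y \<phi> - {s,t}" using gh1 by simp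
    have i: "iv \<phi> s' \<in> gh X Y \<phi> - {s,t}" using iv_not_st[OF a'] .
    have f: "s' \<in> flags X1" "iv \<phi> s' \<in> flags X1" using a' i unfolding gh_def by auto
    show "iv \<phi>1 s' \<in> gh X1 Y \<phi>1 \<and> iv \<phi>1 s' \<noteq> s' \<and> iv \<phi>1 (iv \<phi>1 s') = s'
      \<and> vm \<phi>1 (bd X1 (iv \<phi>1 s')) = vm \<phi>1 (bd X1 s')"
      using a' i f1_vm[OF f(1)] f1_vm[OF f(2)] semD(11,12,13)[OF S, of s'] gh1 by simp
  qed
  show "\<forall>v\<in>verts Y. even (card (gA X1 Y \<phi>1 v)) \<and> 0 \<le> gG X1 Y \<phi>1 v"
  proof
    fix v assume v: "v \<in> verts Y"
    show "even (card (gA X1 Y \<phi>1 v)) \<and> 0 \<le> gG X1 Y \<phi>1 v"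
    proof (cases "v = vm \<phi> (bd X s)")
      case True
      have sA: "s \<in> gA X Y \<phi> v" "t \<in> gA X Y \<phi> v" using sg tg True vmst unfolding gA_def by auto
      have tB: "bd X t \<in> gB X \<phi> v" using btX True vmst unfolding gB_def by auto
      have fA: "finite (gA X Y \<phi> v)" using gA_finite[OF X] .
      have fB: "finite (gB X \<phi> v)" using gB_finite[OF X] .
      have "card {s,t} \<le> card (gA X Y \<phi> v)" using sA fA by (intro card_mono) auto
      then have c2: "2 \<le> card (gA X Y \<phi> v)" using st by simp
      have cA: "card (gA X1 Y \<phi>1 v) + 2 = card (gA X Y \<phi> v)"
        unfolding gA1 using sA st fA c2 by (simp add: card_Diff_subset)
      have cB: "card (gB X1 \<phi>1 v) + 1 = card (gB X \<phi> v)"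
        unfolding gB1 using tB fB card_gt_0_iff[of "gB X \<phi> v"] by (auto simp: card_Diff_subset)
      have e: "even (card (gA X Y \<phi> v))" using semD(14)[OF S v] .
      have g: "0 \<le> gG X Y \<phi> v" using semD(15)[OF S v] .
      have ev1: "even (card (gA X1 Y \<phi>1 v))" using e cA by (metis add_2_eq_Suc' even_Suc_Suc_iff add.commute)
      have "card (gA X1 Y \<phi>1 v) div 2 + 1 = card (gA X Y \<phi> v) div 2" using cA by linarith
      then have "gG X1 Y \<phi>1 v = gG X Y \<phi> v" unfolding gG_def using cB by linarith
      then show ?thesis using ev1 g by simp
    next
      case False
      have "s \<notin> gA X Y \<phi> v" "t \<notin> gA X Y \<phi> v" using False vmst unfolding gA_def by auto
      then have A: "gA X1 Y \<phi>1 v = gA X Y \<phi> v" unfolding gA1 by blast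
      have "bd X t \<notin> gB X \<phi> v" using False vmst unfolding gB_def by auto
      then have B: "gB X1 \<phi>1 v = gB X \<phi> v" unfolding gB1 by blast
      show ?thesis unfolding gG_def A B using semD(14,15)[OF S v] unfolding gG_def by simp
    qed
  qed
  show "\<forall>v\<in>verts Y. \<forall>x\<in>gB X1 \<phi>1 v. \<forall>y\<in>gB X1 \<phi>1 v. (x, y) \<in> (gR X1 Y \<phi>1)\<^sup>*"
  proof (intro ballI)
    fix v x y assume v: "v \<in> verts Y" and x: "x \<in> gB X1 \<phi>1 v" and y: "y \<in> gB X1 \<phi>1 v"
    have xy: "x \<in> gB X \<phi> v" "y \<in> gB X \<phi> v" "x \<noteq> bd X t" "y \<noteq> bd X t" using x y gB1 by auto
    have "(x,y) \<in> (gR X Y \<phi>)\<^sup>*" using semD(16)[OF S v xy(1,2)] .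
    then have "(\<mu> x, \<mu> y) \<in> (gR X1 Y \<phi>1)\<^sup>*"
    proof (rule rtrancl_map_lemma)
      fix p q assume "(p,q) \<in> gR X Y \<phi>"
      then obtain s' where s': "s' \<in> gh X Y \<phi>" "p = bd X s'" "q = bd X (iv \<phi> s')" by (rule gR_E)
      show "(\<mu> p, \<mu> q) \<in> (gR X1 Y \<phi>1)\<^sup>*"
      proof (cases "s' \<in> {s,t}")
        case True
        then have "\<mu> p = \<mu> q" using s' tdef ts by auto
        then show ?thesis by simp
      next
        case False
        then have a': "s' \<in> gh X1 Y \<phi>1" using s' gh1 by simp
        have i: "iv \<phi> s' \<in> gh X Y \<phi> - {s,t}" using iv_not_st False s' by simp
        have f: "s' \<in> flags X1" "iv \<phi> s' \<in> flags X1" using a' i gh1 unfolding gh_def by auto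
        have iv1: "iv \<phi>1 s' = iv \<phi> s'" using False s' by simp
        have "(bd X1 s', bd X1 (iv \<phi>1 s')) \<in> gR X1 Y \<phi>1" using gR_I[OF a'] .
        then have "(\<mu> p, \<mu> q) \<in> gR X1 Y \<phi>1" unfolding iv1 bd1[OF f(1)] bd1[OF f(2)] s'(2,3) .
        then show ?thesis by (rule r_into_rtrancl)
      qed
    qed
    then show "(x, y) \<in> (gR X1 Y \<phi>1)\<^sup>*" using xy by simp
  qed
qed

lemma decomp: "mcomp X X1 Y (edge_mor X s t) \<phi>1 = \<phi>"
proof (rule mor_eqI)
  show "vm (mcomp X X1 Y (edge_mor X s t) \<phi>1) = vm \<phi>"
  proof
    fix a show "vm (mcomp X X1 Y (edge_mor X s t) \<phi>1) a = vm \<phi> a"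
      using vm1 semD(3)[OF S] by (cases "a \<in> verts X") (auto simp: extensional_def)
  qed
  show "fm (mcomp X X1 Y (edge_mor X s t) \<phi>1) = fm \<phi>"
  proof
    fix y show "fm (mcomp X X1 Y (edge_mor X s t) \<phi>1) y = fm \<phi> y"
      using semD(5,7)[OF S] fm_not_st by (cases "y \<in> flags Y") (auto simp: extensional_def)
  qed
  show "iv (mcomp X X1 Y (edge_mor X s t) \<phi>1) = iv \<phi>"
  proof
    fix a
    have im1: "fm (edge_mor X s t) ` fm \<phi>1 ` flags Y = fm \<phi> ` flags Y"
      using semD(7)[OF S] fm_not_st by (auto simp: image_iff)
    have im2: "fm (edge_mor X s t) ` flags X1 = flags X - {s,t}" by (auto simp: image_iff)
    have dom: "flags X - fm (edge_mor X s t) ` fm \<phi>1 ` flags Y = gh X Y \<phi>" unfolding im1 gh_def ..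
    show "iv (mcomp X X1 Y (edge_mor X s t) \<phi>1) a = iv \<phi> a"
    proof (cases "a \<in> gh X Y \<phi>")
      case False
      then show ?thesis using ivext unfolding mcomp_simps dom by (simp add: extensional_def)
    next
      case True
      show ?thesis
      proof (cases "a \<in> {s,t}")
        case True2: True
        then have "a \<notin> fm (edge_mor X s t) ` flags X1" unfolding im2 by blast
        then show ?thesis unfolding mcomp_simps dom using True True2 tdef ts st by auto
      next
        case False
        then have aX1: "a \<in> flags X1" using True unfolding gh_def by auto
        have i: "iv \<phi> a \<in> gh X Y \<phi> - {s,t}" using iv_not_st False True by simp
        have inv: "the_inv_into (flags X1) (fm (edge_mor X s t)) a = a"
          using aX1 by (intro the_inv_into_f_eq) (auto simp: inj_on_def)
        have "iv \<phi> a \<in> flags X1" using i unfolding gh_def by auto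
        then show ?thesis unfolding mcomp_simps dom using True False aX1 inv i im2 by auto
      qed
    qed
  qed
qed

lemma card_gh1: "card (gh X1 Y \<phi>1) < card (gh X Y \<phi>)"
  unfolding gh1 using gh_finite[OF X] sg by (intro psubset_card_mono) auto

lemma card_verts1: "card (verts X1) < card (verts X)"
  using is_aggD(2)[OF X] btX card_gt_0_iff[of "verts X"] by auto

end


locale red_loop = red +
  assumes eq: "bd X s = bd X t" and small: "card (gB X \<phi> (vm \<phi> (bd X s))) \<le> 1"
begin

abbreviation "X1 \<equiv> loop_target X s t"
abbreviation "\<phi>1 \<equiv> red_mor X Y \<phi> X1 s t"

lemma lok: "loop_ok X s t" unfolding loop_ok_def using sX tX eq st by blast
lemma X1: "is_agg X1" using is_agg_loop_target[OF X] .

lemma vm1: "vm \<phi>1 = vm \<phi>" using semD(3)[OF S] by (simp add: extensional_restrict)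
lemma bd1: "f \<in> flags X1 \<Longrightarrow> bd X1 f = bd X f" by simp

lemma gh1: "gh X1 Y \<phi>1 = gh X Y \<phi> - {s,t}" unfolding gh_def by auto

lemma gA1: "gA X1 Y \<phi>1 v = gA X Y \<phi> v - {s,t}"
proof -
  have "s' \<in> gA X1 Y \<phi>1 v \<longleftrightarrow> s' \<in> gA X Y \<phi> v - {s,t}" for s'
  proof (cases "s' \<in> gh X Y \<phi> - {s,t}")
    case True then have "s' \<in> flags X1" unfolding gh_def by auto
    from bd1[OF this] True show ?thesis unfolding gA_def gh1 vm1 by simp
  next
    case False then show ?thesis unfolding gA_def gh1 by blast
  qed
  then show ?thesis by blast
qed

lemma gB1: "gB X1 \<phi>1 v = gB X \<phi> v"
  unfolding gB_def vm1 by auto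

lemma sem1: "sem X1 Y \<phi>1"
  unfolding sem_def
proof (intro conjI)
  show "is_agg X1" using X1 .
  show "is_agg Y" using semD(2)[OF S] .
  show "vm \<phi>1 \<in> extensional (verts X1)" by simp
  show "vm \<phi>1 ` verts X1 = verts Y" unfolding vm1 using semD(4)[OF S] by simp
  show "fm \<phi>1 \<in> extensional (flags Y)" using semD(5)[OF S] by simp
  show "inj_on (fm \<phi>1) (flags Y)" using semD(6)[OF S] by simp
  show "fm \<phi>1 ` flags Y \<subseteq> flags X1" using semD(7)[OF S] fm_not_st by auto
  show "\<forall>y\<in>flags Y. vm \<phi>1 (bd X1 (fm \<phi>1 y)) = bd Y y"
  proof
    fix y assume y: "y \<in> flags Y"
    have "fm \<phi> y \<in> flags X1" using semD(7)[OF S] fm_not_st y by auto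
    then show "vm \<phi>1 (bd X1 (fm \<phi>1 y)) = bd Y y" using bd1 semD(8)[OF S y] vm1 by simp
  qed
  show "iv \<phi>1 \<in> extensional (gh X1 Y \<phi>1)" unfolding gh1 by simp
  show "\<forall>s'\<in>gh X1 Y \<phi>1. iv \<phi>1 s' \<in> gh X1 Y \<phi>1 \<and> iv \<phi>1 s' \<noteq> s' \<and> iv \<phi>1 (iv \<phi>1 s') = s'
      \<and> vm \<phi>1 (bd X1 (iv \<phi>1 s')) = vm \<phi>1 (bd X1 s')"
  proof
    fix s' assume a: "s' \<in> gh X1 Y \<phi>1"
    then have a': "s' \<in> gh X Y \<phi> - {s,t}" using gh1 by simp
    have i: "iv \<phi> s' \<in> gh X Y \<phi> - {s,t}" using iv_not_st[OF a'] .
    have f: "s' \<in> flags X1" "iv \<phi> s' \<in> flags X1" using a' i unfolding gh_def by auto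
    show "iv \<phi>1 s' \<in> gh X1 Y \<phi>1 \<and> iv \<phi>1 s' \<noteq> s' \<and> iv \<phi>1 (iv \<phi>1 s') = s'
      \<and> vm \<phi>1 (bd X1 (iv \<phi>1 s')) = vm \<phi>1 (bd X1 s')"
      using a' i bd1[OF f(1)] bd1[OF f(2)] semD(11,12,13)[OF S, of s'] gh1 vm1 by simp
  qed
  show "\<forall>v\<in>verts Y. even (card (gA X1 Y \<phi>1 v)) \<and> 0 \<le> gG X1 Y \<phi>1 v"
  proof
    fix v assume v: "v \<in> verts Y"
    show "even (card (gA X1 Y \<phi>1 v)) \<and> 0 \<le> gG X1 Y \<phi>1 v"
    proof (cases "v = vm \<phi> (bd X s)")
      case True
      have sA: "s \<in> gA X Y \<phi> v" "t \<in> gA X Y \<phi> v" using sg tg True eq unfolding gA_def by auto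
      have fA: "finite (gA X Y \<phi> v)" using gA_finite[OF X] .
      have "card {s,t} \<le> card (gA X Y \<phi> v)" using sA fA by (intro card_mono) auto
      then have c2: "2 \<le> card (gA X Y \<phi> v)" using st by simp
      have cA: "card (gA X1 Y \<phi>1 v) + 2 = card (gA X Y \<phi> v)"
        unfolding gA1 using sA st fA c2 by (simp add: card_Diff_subset)
      have e: "even (card (gA X Y \<phi> v))" using semD(14)[OF S v] .
      have ev1: "even (card (gA X1 Y \<phi>1 v))" using e cA by (metis add_2_eq_Suc' even_Suc_Suc_iff add.commute)
      have cB: "card (gB X1 \<phi>1 v) \<le> 1" unfolding gB1 using small True by simp
      have "0 \<le> gG X1 Y \<phi>1 v" unfolding gG_def using cB by linarith
      then show ?thesis using ev1 by simp
    next
      case False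
      have "s \<notin> gA X Y \<phi> v" "t \<notin> gA X Y \<phi> v" using False eq unfolding gA_def by auto
      then have A: "gA X1 Y \<phi>1 v = gA X Y \<phi> v" unfolding gA1 by blast
      show ?thesis unfolding gG_def A gB1 using semD(14,15)[OF S v] unfolding gG_def by simp
    qed
  qed
  show "\<forall>v\<in>verts Y. \<forall>x\<in>gB X1 \<phi>1 v. \<forall>y\<in>gB X1 \<phi>1 v. (x, y) \<in> (gR X1 Y \<phi>1)\<^sup>*"
  proof (intro ballI)
    fix v x y assume v: "v \<in> verts Y" and x: "x \<in> gB X1 \<phi>1 v" and y: "y \<in> gB X1 \<phi>1 v"
    have xy: "x \<in> gB X \<phi> v" "y \<in> gB X \<phi> v" using x y gB1 by auto
    have "(x,y) \<in> (gR X Y \<phi>)\<^sup>*" using semD(16)[OF S v xy(1,2)] .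
    then have "(id x, id y) \<in> (gR X1 Y \<phi>1)\<^sup>*"
    proof (rule rtrancl_map_lemma)
      fix p q assume "(p,q) \<in> gR X Y \<phi>"
      then obtain s' where s': "s' \<in> gh X Y \<phi>" "p = bd X s'" "q = bd X (iv \<phi> s')" by (rule gR_E)
      show "(id p, id q) \<in> (gR X1 Y \<phi>1)\<^sup>*"
      proof (cases "s' \<in> {s,t}")
        case True
        then have "p = q" using s' tdef ts eq by auto
        then show ?thesis by simp
      next
        case False
        then have a': "s' \<in> gh X1 Y \<phi>1" using s' gh1 by simp
        have i: "iv \<phi> s' \<in> gh X Y \<phi> - {s,t}" using iv_not_st False s' by simp
        have f: "s' \<in> flags X1" "iv \<phi> s' \<in> flags X1" using a' i gh1 unfolding gh_def by auto
        have iv1: "iv \<phi>1 s' = iv \<phi> s'" using False s' by simp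
        have "(bd X1 s', bd X1 (iv \<phi>1 s')) \<in> gR X1 Y \<phi>1" using gR_I[OF a'] .
        then have "(p, q) \<in> gR X1 Y \<phi>1" unfolding iv1 bd1[OF f(1)] bd1[OF f(2)] s'(2,3) .
        then show ?thesis by simp
      qed
    qed
    then show "(x, y) \<in> (gR X1 Y \<phi>1)\<^sup>*" by simp
  qed
qed

lemma decomp: "mcomp X X1 Y (loop_mor X s t) \<phi>1 = \<phi>"
proof (rule mor_eqI)
  show "vm (mcomp X X1 Y (loop_mor X s t) \<phi>1) = vm \<phi>"
  proof
    fix a show "vm (mcomp X X1 Y (loop_mor X s t) \<phi>1) a = vm \<phi> a"
      using vm1 semD(3)[OF S] by (cases "a \<in> verts X") (auto simp: extensional_def)
  qed
  show "fm (mcomp X X1 Y (loop_mor X s t) \<phi>1) = fm \<phi>"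
  proof
    fix y show "fm (mcomp X X1 Y (loop_mor X s t) \<phi>1) y = fm \<phi> y"
      using semD(5,7)[OF S] fm_not_st by (cases "y \<in> flags Y") (auto simp: extensional_def)
  qed
  show "iv (mcomp X X1 Y (loop_mor X s t) \<phi>1) = iv \<phi>"
  proof
    fix a
    have im1: "fm (loop_mor X s t) ` fm \<phi>1 ` flags Y = fm \<phi> ` flags Y"
      using semD(7)[OF S] fm_not_st by (auto simp: image_iff)
    have im2: "fm (loop_mor X s t) ` flags X1 = flags X - {s,t}" by (auto simp: image_iff)
    have dom: "flags X - fm (loop_mor X s t) ` fm \<phi>1 ` flags Y = gh X Y \<phi>" unfolding im1 gh_def ..
    show "iv (mcomp X X1 Y (loop_mor X s t) \<phi>1) a = iv \<phi> a"
    proof (cases "a \<in> gh X Y \<phi>")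
      case False
      then show ?thesis using ivext unfolding mcomp_simps dom by (simp add: extensional_def)
    next
      case True
      show ?thesis
      proof (cases "a \<in> {s,t}")
        case True2: True
        then have "a \<notin> fm (loop_mor X s t) ` flags X1" unfolding im2 by blast
        then show ?thesis unfolding mcomp_simps dom using True True2 tdef ts st by auto
      next
        case False
        then have aX1: "a \<in> flags X1" using True unfolding gh_def by auto
        have i: "iv \<phi> a \<in> gh X Y \<phi> - {s,t}" using iv_not_st False True by simp
        have inv: "the_inv_into (flags X1) (fm (loop_mor X s t)) a = a"
          using aX1 by (intro the_inv_into_f_eq) (auto simp: inj_on_def)
        have "iv \<phi> a \<in> flags X1" using i unfolding gh_def by auto
        then show ?thesis unfolding mcomp_simps dom using True False aX1 inv i im2 by auto
      qed
    qed
  qed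
qed

lemma card_gh1: "card (gh X1 Y \<phi>1) < card (gh X Y \<phi>)"
  unfolding gh1 using gh_finite[OF X] sg by (intro psubset_card_mono) auto

end

lemma sem_iso_case:
  assumes S: "sem X Y \<phi>" and E: "gh X Y \<phi> = {}"
  shows "iso_mor X Y \<phi>"
proof -
  have X: "is_agg X" using semD(1)[OF S] .
  have R: "gR X Y \<phi> = {}" unfolding gR_def E by simp
  have injV: "inj_on (vm \<phi>) (verts X)"
  proof (rule inj_onI)
    fix x y assume x: "x \<in> verts X" and y: "y \<in> verts X" and e: "vm \<phi> x = vm \<phi> y"
    have v: "vm \<phi> x \<in> verts Y" using semD(4)[OF S] x by blast
    have "(x,y) \<in> (gR X Y \<phi>)\<^sup>*" using semD(16)[OF S v] x y e unfolding gB_def by auto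
    then show "x = y" unfolding R by simp
  qed
  have bV: "bij_betw (vm \<phi>) (verts X) (verts Y)" using injV semD(4)[OF S] by (simp add: bij_betw_def)
  have fmim: "fm \<phi> ` flags Y = flags X" using E semD(7)[OF S] unfolding gh_def by blast
  have bF0: "bij_betw (fm \<phi>) (flags Y) (flags X)" using semD(6)[OF S] fmim by (simp add: bij_betw_def)
  define \<sigma>F where "\<sigma>F = the_inv_into (flags Y) (fm \<phi>)"
  have bF: "bij_betw \<sigma>F (flags X) (flags Y)" unfolding \<sigma>F_def by (rule bij_betw_the_inv_into[OF bF0])
  have sfy: "\<sigma>F (fm \<phi> y) = y" if "y \<in> flags Y" for y
    unfolding \<sigma>F_def using the_inv_into_f_f[OF semD(6)[OF S] that] .
  have inc: "\<forall>f\<in>flags X. bd Y (\<sigma>F f) = vm \<phi> (bd X f)"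
  proof
    fix f assume "f \<in> flags X"
    then obtain y where y: "y \<in> flags Y" "f = fm \<phi> y" using fmim by blast
    show "bd Y (\<sigma>F f) = vm \<phi> (bd X f)" using y sfy semD(8)[OF S y(1)] by simp
  qed
  have fmeq: "restrict (the_inv_into (flags X) \<sigma>F) (flags Y) = fm \<phi>"
  proof
    fix y show "restrict (the_inv_into (flags X) \<sigma>F) (flags Y) y = fm \<phi> y"
    proof (cases "y \<in> flags Y")
      case True
      have "fm \<phi> y \<in> flags X" using True fmim by blast
      then have "the_inv_into (flags X) \<sigma>F y = fm \<phi> y"
        using sfy[OF True] bF by (intro the_inv_into_f_eq) (auto simp: bij_betw_def)
      then show ?thesis using True by simp
    next
      case False then show ?thesis using semD(5)[OF S] by (simp add: extensional_def)
    qed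
  qed
  have iveq: "(\<lambda>_. undefined) = iv \<phi>" using semD(9)[OF S] E by (auto simp: extensional_def)
  have vmeq: "restrict (vm \<phi>) (verts X) = vm \<phi>" using semD(3)[OF S] by (simp add: extensional_restrict)
  have "\<phi> = (restrict (vm \<phi>) (verts X), restrict (the_inv_into (flags X) \<sigma>F) (flags Y), (\<lambda>_. undefined))"
    by (rule mor_eqI) (simp_all add: fmeq iveq vmeq)
  then show ?thesis unfolding iso_mor_def using bV bF inc by blast
qed

theorem sem_ctd: "sem X Y \<phi> \<Longrightarrow> ctd X Y \<phi>"
proof (induction "card (gh X Y \<phi>)" arbitrary: X \<phi> rule: less_induct)
  case less
  have S: "sem X Y \<phi>" using less.prems .
  show ?case
  proof (cases "gh X Y \<phi> = {}")
    case True
    then show ?thesis using sem_iso_case[OF S True] semD(1,2)[OF S] by (blast intro: ctd_iso)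
  next
    case ne: False
    show ?thesis
    proof (cases "\<exists>s\<in>gh X Y \<phi>. bd X s \<noteq> bd X (iv \<phi> s)")
      case True
      then obtain s where s: "s \<in> gh X Y \<phi>" "bd X s \<noteq> bd X (iv \<phi> s)" by blast
      interpret red_edge X Y \<phi> s "iv \<phi> s" by unfold_locales (use S s in auto)
      have c1: "ctd X X1 (edge_mor X s (iv \<phi> s))" using X eok by (rule ctd_edge)
      have c2: "ctd X1 Y \<phi>1" using less.hyps[OF card_gh1 sem1] .
      show ?thesis using ctd_comp[OF c1 c2] decomp by simp
    next
      case False
      then have lps: "\<forall>s\<in>gh X Y \<phi>. bd X (iv \<phi> s) = bd X s" by auto
      obtain s where s: "s \<in> gh X Y \<phi>" using ne by blast
      have RId: "gR X Y \<phi> \<subseteq> Id" using lps unfolding gR_def by auto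
      have small: "card (gB X \<phi> v) \<le> 1" if v: "v \<in> verts Y" for v
      proof -
        have "\<forall>x\<in>gB X \<phi> v. \<forall>y\<in>gB X \<phi> v. x = y"
        proof (intro ballI)
          fix x y assume "x \<in> gB X \<phi> v" "y \<in> gB X \<phi> v"
          then have "(x,y) \<in> (gR X Y \<phi>)\<^sup>*" using semD(16)[OF S v] by blast
          then have "(x,y) \<in> Id\<^sup>*" using rtrancl_mono[OF RId] by blast
          then show "x = y" by simp
        qed
        then show ?thesis using card_le_Suc0_iff_eq[OF gB_finite[OF semD(1)[OF S]]] by auto
      qed
      have sX: "s \<in> flags X" using s unfolding gh_def by blast
      have vv: "vm \<phi> (bd X s) \<in> verts Y"
        using semD(4)[OF S] is_aggD(3)[OF semD(1)[OF S] sX] by blast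
      interpret red_loop X Y \<phi> s "iv \<phi> s"
        by unfold_locales (use S s lps small[OF vv] in auto)
      have c1: "ctd X X1 (loop_mor X s (iv \<phi> s))" using X lok by (rule ctd_loop)
      have c2: "ctd X1 Y \<phi>1" using less.hyps[OF card_gh1 sem1] .
      show ?thesis using ctd_comp[OF c1 c2] decomp by simp
    qed
  qed
qed


definition fbase :: "agg \<Rightarrow> nat" where "fbase Y = Suc (Max (insert 0 (flags Y)))"
definition fr :: "agg \<Rightarrow> nat \<Rightarrow> nat \<Rightarrow> nat \<Rightarrow> nat" where
  "fr Y v k b = fbase Y + 2 * prod_encode (v,k) + b"
definition fresh :: "agg \<Rightarrow> (nat \<Rightarrow> nat) \<Rightarrow> nat set" where
  "fresh Y g = {fr Y v k b | v k b. v \<in> verts Y \<and> k < g v \<and> b < 2}"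
definition cflags :: "agg \<Rightarrow> (nat \<Rightarrow> nat) \<Rightarrow> nat set" where
  "cflags Y g = flags Y \<union> fresh Y g"
definition cbd :: "agg \<Rightarrow> nat \<Rightarrow> nat" where
  "cbd Y f = (if f \<in> flags Y then bd Y f else fst (prod_decode ((f - fbase Y) div 2)))"
definition canX :: "agg \<Rightarrow> (nat \<Rightarrow> nat) \<Rightarrow> agg" where
  "canX Y g = (cflags Y g, verts Y, restrict (cbd Y) (cflags Y g))"
definition civ :: "agg \<Rightarrow> nat \<Rightarrow> nat" where
  "civ Y f = (if even (f - fbase Y) then f + 1 else f - 1)"
definition canM :: "agg \<Rightarrow> (nat \<Rightarrow> nat) \<Rightarrow> mor" where
  "canM Y g = (restrict id (verts Y), restrict id (flags Y), restrict (civ Y) (fresh Y g))"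

lemma canX_simps[simp]: "flags (canX Y g) = cflags Y g" "verts (canX Y g) = verts Y"
  "bd (canX Y g) = restrict (cbd Y) (cflags Y g)"
  unfolding canX_def by auto

lemma canM_simps[simp]: "vm (canM Y g) = restrict id (verts Y)" "fm (canM Y g) = restrict id (flags Y)"
  "iv (canM Y g) = restrict (civ Y) (fresh Y g)"
  unfolding canM_def by auto

lemma flags_lt_fbase: "finite (flags Y) \<Longrightarrow> f \<in> flags Y \<Longrightarrow> f < fbase Y"
  unfolding fbase_def by (simp add: le_imp_less_Suc)

lemma fr_ge: "fbase Y \<le> fr Y v k b" unfolding fr_def by simp

lemma fr_decode: "b < 2 \<Longrightarrow> (fr Y v k b - fbase Y) div 2 = prod_encode (v,k)"
  unfolding fr_def by auto

lemma fr_parity: "b < 2 \<Longrightarrow> even (fr Y v k b - fbase Y) \<longleftrightarrow> b = 0"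
  unfolding fr_def by auto

lemma fr_inj: "b < 2 \<Longrightarrow> b' < 2 \<Longrightarrow> fr Y v k b = fr Y v' k' b' \<Longrightarrow> v = v' \<and> k = k' \<and> b = b'"
proof -
  assume b: "b < 2" and b': "b' < 2" and e: "fr Y v k b = fr Y v' k' b'"
  have "prod_encode (v,k) = prod_encode (v',k')" using fr_decode[OF b, of Y v k] fr_decode[OF b', of Y v' k'] e by simp
  then have "(v,k) = (v',k')" by simp
  moreover have "b = b'" using fr_parity[OF b, of Y v k] fr_parity[OF b', of Y v' k'] e b b' by auto
  ultimately show ?thesis by simp
qed

lemma cbd_fr: "b < 2 \<Longrightarrow> finite (flags Y) \<Longrightarrow> cbd Y (fr Y v k b) = v"
proof -
  assume b: "b < 2" and f: "finite (flags Y)"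
  have "fr Y v k b \<notin> flags Y" using flags_lt_fbase[OF f] fr_ge[of Y v k b] by fastforce
  then show ?thesis unfolding cbd_def using fr_decode[OF b] by simp
qed

lemma civ_fr0: "civ Y (fr Y v k 0) = fr Y v k 1"
proof -
  have "fr Y v k 0 - fbase Y = 2 * prod_encode (v,k)" unfolding fr_def by simp
  then have "even (fr Y v k 0 - fbase Y)" by simp
  then show ?thesis unfolding civ_def by (simp add: fr_def)
qed
lemma civ_fr1: "civ Y (fr Y v k 1) = fr Y v k 0"
proof -
  have "fr Y v k 1 - fbase Y = 2 * prod_encode (v,k) + 1" unfolding fr_def by simp
  then have "\<not> even (fr Y v k 1 - fbase Y)" by simp
  then show ?thesis unfolding civ_def by (simp add: fr_def)
qed

lemma fresh_disj: "finite (flags Y) \<Longrightarrow> flags Y \<inter> fresh Y g = {}"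
proof -
  assume f: "finite (flags Y)"
  have "x \<notin> flags Y" if xf: "x \<in> fresh Y g" for x
  proof -
    obtain v k b where "x = fr Y v k b" using xf unfolding fresh_def by blast
    then have "fbase Y \<le> x" using fr_ge by simp
    then show ?thesis using flags_lt_fbase[OF f, of x] by auto
  qed
  then show ?thesis by blast
qed

lemma fresh_eq: "fresh Y g = (\<lambda>(v,k,b). fr Y v k b) ` (SIGMA v:verts Y. {0..<g v} \<times> {0..<2})"
proof (rule set_eqI)
  fix x show "x \<in> fresh Y g \<longleftrightarrow> x \<in> (\<lambda>(v,k,b). fr Y v k b) ` (SIGMA v:verts Y. {0..<g v} \<times> {0..<2})"
  proof
    assume "x \<in> fresh Y g"
    then obtain v k b where "v \<in> verts Y" "k < g v" "b < 2" "x = fr Y v k b" unfolding fresh_def by blast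
    then show "x \<in> (\<lambda>(v,k,b). fr Y v k b) ` (SIGMA v:verts Y. {0..<g v} \<times> {0..<2})"
      by (intro image_eqI[of _ _ "(v,k,b)"]) auto
  next
    assume "x \<in> (\<lambda>(v,k,b). fr Y v k b) ` (SIGMA v:verts Y. {0..<g v} \<times> {0..<2})"
    then obtain v k b where "v \<in> verts Y" "k < g v" "b < 2" "x = fr Y v k b" by auto
    then show "x \<in> fresh Y g" unfolding fresh_def by blast
  qed
qed

lemma fresh_finite: "finite (verts Y) \<Longrightarrow> finite (fresh Y g)"
  unfolding fresh_eq by (intro finite_imageI finite_SigmaI) auto

lemma gA_can_set: "v \<in> verts Y \<Longrightarrow> is_agg Y \<Longrightarrow> gA (canX Y g) Y (canM Y g) v = (\<lambda>(k,b). fr Y v k b) ` ({0..<g v} \<times> {0..<2})"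
proof -
  assume v: "v \<in> verts Y" and Y: "is_agg Y"
  have fY: "finite (flags Y)" using is_aggD(1)[OF Y] .
  have gh: "gh (canX Y g) Y (canM Y g) = fresh Y g"
    unfolding gh_def using fresh_disj[OF fY] by (auto simp: image_iff cflags_def)
  have "s \<in> gA (canX Y g) Y (canM Y g) v \<longleftrightarrow> s \<in> (\<lambda>(k,b). fr Y v k b) ` ({0..<g v} \<times> {0..<2})" for s
  proof
    assume "s \<in> gA (canX Y g) Y (canM Y g) v"
    then have s: "s \<in> fresh Y g" and sv: "vm (canM Y g) (bd (canX Y g) s) = v" unfolding gA_def gh by auto
    obtain w k b where w: "w \<in> verts Y" "k < g w" "b < 2" "s = fr Y w k b" using s unfolding fresh_def by blast
    have "bd (canX Y g) s = w" using w cbd_fr[OF w(3) fY] s by (simp add: cflags_def)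
    then have "w = v" using sv w by simp
    then show "s \<in> (\<lambda>(k,b). fr Y v k b) ` ({0..<g v} \<times> {0..<2})" using w by auto
  next
    assume "s \<in> (\<lambda>(k,b). fr Y v k b) ` ({0..<g v} \<times> {0..<2})"
    then obtain k b where kb: "k < g v" "b < 2" "s = fr Y v k b" by auto
    have s: "s \<in> fresh Y g" using kb v unfolding fresh_def by blast
    have "bd (canX Y g) s = v" using kb cbd_fr[OF kb(2) fY] s by (simp add: cflags_def)
    then show "s \<in> gA (canX Y g) Y (canM Y g) v" unfolding gA_def gh using s v by simp
  qed
  then show ?thesis by blast
qed

lemma can_sem:
  assumes Y: "is_agg Y"
  shows "sem (canX Y g) Y (canM Y g)" "\<And>v. v \<in> verts Y \<Longrightarrow> gG (canX Y g) Y (canM Y g) v = int (g v)"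
    "gh (canX Y g) Y (canM Y g) = fresh Y g"
proof -
  have fY: "finite (flags Y)" and fV: "finite (verts Y)" using is_aggD[OF Y] by auto
  show gh: "gh (canX Y g) Y (canM Y g) = fresh Y g"
    unfolding gh_def using fresh_disj[OF fY] by (auto simp: image_iff cflags_def)
  have B: "gB (canX Y g) (canM Y g) v = {v}" if "v \<in> verts Y" for v
    using that unfolding gB_def by auto
  have cardA: "card (gA (canX Y g) Y (canM Y g) v) = 2 * g v" if v: "v \<in> verts Y" for v
  proof -
    have "inj_on (\<lambda>(k,b). fr Y v k b) ({0..<g v} \<times> {0..<2})"
      by (rule inj_onI) (auto dest: fr_inj)
    then have "card ((\<lambda>(k,b). fr Y v k b) ` ({0..<g v} \<times> {0..<2})) = card ({0..<g v} \<times> {0..<(2::nat)})"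
      by (rule card_image)
    then show ?thesis unfolding gA_can_set[OF v Y] by (simp add: card_cartesian_product)
  qed
  show G: "\<And>v. v \<in> verts Y \<Longrightarrow> gG (canX Y g) Y (canM Y g) v = int (g v)"
    unfolding gG_def using cardA B by simp
  have aggX: "is_agg (canX Y g)"
    unfolding is_agg_def
  proof (intro conjI)
    show "finite (flags (canX Y g))" using fY fresh_finite[OF fV] by (simp add: cflags_def)
    show "finite (verts (canX Y g))" using fV by simp
    show "bd (canX Y g) ` flags (canX Y g) \<subseteq> verts (canX Y g)"
    proof
      fix x assume "x \<in> bd (canX Y g) ` flags (canX Y g)"
      then obtain f where f: "f \<in> cflags Y g" "x = cbd Y f" by auto
      show "x \<in> verts (canX Y g)"
      proof (cases "f \<in> flags Y")
        case True then show ?thesis using f is_aggD(3)[OF Y] by (simp add: cbd_def)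
      next
        case False
        then obtain v k b where "v \<in> verts Y" "k < g v" "b < 2" "f = fr Y v k b"
          using f unfolding cflags_def fresh_def by blast
        then show ?thesis using f cbd_fr[OF _ fY] by simp
      qed
    qed
    show "bd (canX Y g) \<in> extensional (flags (canX Y g))" by simp
  qed
  show "sem (canX Y g) Y (canM Y g)"
    unfolding sem_def
  proof (intro conjI)
    show "is_agg (canX Y g)" using aggX .
    show "fm (canM Y g) ` flags Y \<subseteq> flags (canX Y g)" by (auto simp: cflags_def)
    show "\<forall>y\<in>flags Y. vm (canM Y g) (bd (canX Y g) (fm (canM Y g) y)) = bd Y y"
      using is_aggD(3)[OF Y] by (auto simp: cflags_def cbd_def)
    show "iv (canM Y g) \<in> extensional (gh (canX Y g) Y (canM Y g))" unfolding gh by simp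
    show "\<forall>s\<in>gh (canX Y g) Y (canM Y g). iv (canM Y g) s \<in> gh (canX Y g) Y (canM Y g) \<and>
       iv (canM Y g) s \<noteq> s \<and> iv (canM Y g) (iv (canM Y g) s) = s \<and>
       vm (canM Y g) (bd (canX Y g) (iv (canM Y g) s)) = vm (canM Y g) (bd (canX Y g) s)"
    proof
      fix s assume "s \<in> gh (canX Y g) Y (canM Y g)"
      then have s: "s \<in> fresh Y g" using gh by simp
      then obtain v k b where w: "v \<in> verts Y" "k < g v" "b < 2" "s = fr Y v k b" unfolding fresh_def by blast
      have o: "fr Y v k (1 - b) \<in> fresh Y g" using w unfolding fresh_def by force
      have iv: "civ Y s = fr Y v k (1 - b)" using w civ_fr0 civ_fr1 by (cases b) auto
      have iv2: "civ Y (fr Y v k (1 - b)) = s" using w civ_fr0 civ_fr1 by (cases b) auto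
      have ne: "fr Y v k (1 - b) \<noteq> s"
      proof
        assume "fr Y v k (1 - b) = s"
        then have "b = 1 - b" using fr_inj[of b "1 - b" Y v k v k] w by auto
        then show False using w(3) by presburger
      qed
      have b1: "cbd Y s = v" "cbd Y (fr Y v k (1 - b)) = v" using cbd_fr fY w by auto
      show "iv (canM Y g) s \<in> gh (canX Y g) Y (canM Y g) \<and>
       iv (canM Y g) s \<noteq> s \<and> iv (canM Y g) (iv (canM Y g) s) = s \<and>
       vm (canM Y g) (bd (canX Y g) (iv (canM Y g) s)) = vm (canM Y g) (bd (canX Y g) s)"
        using s o iv iv2 ne b1 gh w by (simp add: cflags_def)
    qed
    show "\<forall>v\<in>verts Y. even (card (gA (canX Y g) Y (canM Y g) v)) \<and> 0 \<le> gG (canX Y g) Y (canM Y g) v"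
      using cardA G by simp
    show "\<forall>v\<in>verts Y. \<forall>x\<in>gB (canX Y g) (canM Y g) v. \<forall>y\<in>gB (canX Y g) (canM Y g) v.
        (x, y) \<in> (gR (canX Y g) Y (canM Y g))\<^sup>*"
      using B by simp
  qed (use Y in \<open>auto simp: inj_on_def image_iff\<close>)
qed


definition Gn :: "agg \<Rightarrow> agg \<Rightarrow> mor \<Rightarrow> nat \<Rightarrow> nat" where
  "Gn X Y \<phi> = restrict (\<lambda>v. nat (gG X Y \<phi> v)) (verts Y)"

definition Rep :: "agg \<Rightarrow> agg \<Rightarrow> mor \<Rightarrow> nat \<Rightarrow> nat set" where
  "Rep X Y \<phi> v = {s \<in> gA X Y \<phi> v. s < iv \<phi> s}"

lemma lps_single:
  assumes S: "sem X Y \<phi>" and lps: "\<forall>s\<in>gh X Y \<phi>. bd X (iv \<phi> s) = bd X s"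
    and v: "v \<in> verts Y"
  shows "card (gB X \<phi> v) = 1"
proof -
  have RId: "gR X Y \<phi> \<subseteq> Id" using lps unfolding gR_def by auto
  have "\<forall>x\<in>gB X \<phi> v. \<forall>y\<in>gB X \<phi> v. x = y"
  proof (intro ballI)
    fix x y assume "x \<in> gB X \<phi> v" "y \<in> gB X \<phi> v"
    then have "(x,y) \<in> (gR X Y \<phi>)\<^sup>*" using semD(16)[OF S v] by blast
    then have "(x,y) \<in> Id\<^sup>*" using rtrancl_mono[OF RId] by blast
    then show "x = y" by simp
  qed
  moreover obtain x where "x \<in> gB X \<phi> v" using gB_nonempty[OF S v] by blast
  ultimately have "gB X \<phi> v = {x}" by blast
  then show ?thesis by simp
qed

lemma vm_inj_lps:
  assumes S: "sem X Y \<phi>" and lps: "\<forall>s\<in>gh X Y \<phi>. bd X (iv \<phi> s) = bd X s"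
  shows "inj_on (vm \<phi>) (verts X)"
proof (rule inj_onI)
  fix x y assume x: "x \<in> verts X" and y: "y \<in> verts X" and e: "vm \<phi> x = vm \<phi> y"
  have v: "vm \<phi> x \<in> verts Y" using semD(4)[OF S] x by blast
  have c: "card (gB X \<phi> (vm \<phi> x)) = 1" using lps_single[OF S lps v] .
  have "x \<in> gB X \<phi> (vm \<phi> x)" "y \<in> gB X \<phi> (vm \<phi> x)" using x y e unfolding gB_def by auto
  then show "x = y" using c by (metis card_1_singletonE singletonD)
qed

lemma iv_gA: "sem X Y \<phi> \<Longrightarrow> s \<in> gA X Y \<phi> v \<Longrightarrow> iv \<phi> s \<in> gA X Y \<phi> v"
  unfolding gA_def using semD(10,13) by blast

lemma card_Rep:
  assumes S: "sem X Y \<phi>" and lps: "\<forall>s\<in>gh X Y \<phi>. bd X (iv \<phi> s) = bd X s"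
    and v: "v \<in> verts Y"
  shows "card (Rep X Y \<phi> v) = Gn X Y \<phi> v"
proof -
  let ?R = "Rep X Y \<phi> v" and ?A = "gA X Y \<phi> v"
  have X: "is_agg X" using semD(1)[OF S] .
  have RA: "?R \<subseteq> ?A" unfolding Rep_def by auto
  have fA: "finite ?A" using gA_finite[OF X] .
  have Aeq: "?A = ?R \<union> iv \<phi> ` ?R"
  proof
    show "?R \<union> iv \<phi> ` ?R \<subseteq> ?A" using RA iv_gA[OF S] by blast
    show "?A \<subseteq> ?R \<union> iv \<phi> ` ?R"
    proof
      fix s assume s: "s \<in> ?A"
      have sg: "s \<in> gh X Y \<phi>" using s unfolding gA_def by auto
      show "s \<in> ?R \<union> iv \<phi> ` ?R"
      proof (cases "s < iv \<phi> s")
        case True then show ?thesis using s unfolding Rep_def by auto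
      next
        case False
        have ne: "iv \<phi> s \<noteq> s" using semD(11)[OF S sg] .
        have ii: "iv \<phi> (iv \<phi> s) = s" using semD(12)[OF S sg] .
        have "iv \<phi> s \<in> ?R" using False ne ii iv_gA[OF S s] unfolding Rep_def by auto
        then show ?thesis using ii by (metis UnI2 image_eqI)
      qed
    qed
  qed
  have disj: "?R \<inter> iv \<phi> ` ?R = {}"
  proof -
    have "False" if a: "a \<in> ?R" and b: "b \<in> ?R" and e: "a = iv \<phi> b" for a b
    proof -
      have bg: "b \<in> gh X Y \<phi>" using b unfolding Rep_def gA_def by auto
      have "a < iv \<phi> a" "b < iv \<phi> b" using a b unfolding Rep_def by auto
      then show False using e semD(12)[OF S bg] by simp
    qed
    then show ?thesis by blast
  qed
  have injR: "inj_on (iv \<phi>) ?R"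
  proof (rule inj_onI)
    fix a b assume "a \<in> ?R" "b \<in> ?R" "iv \<phi> a = iv \<phi> b"
    then show "a = b" using semD(12)[OF S] unfolding Rep_def gA_def by (metis (no_types, lifting) mem_Collect_eq)
  qed
  have fR: "finite ?R" using RA fA finite_subset by blast
  have "card ?A = 2 * card ?R"
    unfolding Aeq using card_Un_disjoint[OF fR finite_imageI[OF fR] disj] card_image[OF injR] by simp
  moreover have "card (gB X \<phi> v) = 1" using lps_single[OF S lps v] .
  ultimately show ?thesis unfolding Gn_def gG_def using v by simp
qed

locale loopnf =
  fixes X Y \<phi> h
  assumes S: "sem X Y \<phi>" and lps: "\<forall>s\<in>gh X Y \<phi>. bd X (iv \<phi> s) = bd X s"
    and hb: "\<forall>v\<in>verts Y. bij_betw (h v) (Rep X Y \<phi> v) {0..<Gn X Y \<phi> v}"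
begin

abbreviation "gn \<equiv> Gn X Y \<phi>"
abbreviation "Xc \<equiv> canX Y gn"

definition sig :: "nat \<Rightarrow> nat" where
  "sig s = (if s \<in> fm \<phi> ` flags Y then the_inv_into (flags Y) (fm \<phi>) s
            else (if s < iv \<phi> s then fr Y (vm \<phi> (bd X s)) (h (vm \<phi> (bd X s)) s) 0
                  else fr Y (vm \<phi> (bd X s)) (h (vm \<phi> (bd X s)) (iv \<phi> s)) 1))"

lemma X: "is_agg X" using semD(1)[OF S] .
lemma Y: "is_agg Y" using semD(2)[OF S] .
lemma fY: "finite (flags Y)" using is_aggD(1)[OF Y] .

lemma sig_fm: "y \<in> flags Y \<Longrightarrow> sig (fm \<phi> y) = y"
  unfolding sig_def using the_inv_into_f_f[OF semD(6)[OF S]] by auto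

lemma gh_v: "s \<in> gh X Y \<phi> \<Longrightarrow> vm \<phi> (bd X s) \<in> verts Y"
  using semD(4)[OF S] is_aggD(3)[OF X] unfolding gh_def by blast

lemma gh_gA: "s \<in> gh X Y \<phi> \<Longrightarrow> s \<in> gA X Y \<phi> (vm \<phi> (bd X s))"
  unfolding gA_def by simp

lemma gh_notfm: "s \<in> gh X Y \<phi> \<Longrightarrow> s \<notin> fm \<phi> ` flags Y" unfolding gh_def by blast

lemma sig_gh:
  assumes s: "s \<in> gh X Y \<phi>"
  obtains r b where "r \<in> Rep X Y \<phi> (vm \<phi> (bd X s))" "b < 2"
    "sig s = fr Y (vm \<phi> (bd X s)) (h (vm \<phi> (bd X s)) r) b"
    "b = 0 \<longleftrightarrow> s < iv \<phi> s" "r = (if s < iv \<phi> s then s else iv \<phi> s)"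
proof (cases "s < iv \<phi> s")
  case True
  then have "s \<in> Rep X Y \<phi> (vm \<phi> (bd X s))" using gh_gA[OF s] unfolding Rep_def by auto
  then show ?thesis using that[of s 0] True gh_notfm[OF s] unfolding sig_def by auto
next
  case False
  let ?v = "vm \<phi> (bd X s)"
  have ne: "iv \<phi> s \<noteq> s" using semD(11)[OF S s] .
  have ii: "iv \<phi> (iv \<phi> s) = s" using semD(12)[OF S s] .
  have "iv \<phi> s \<in> gA X Y \<phi> ?v" using iv_gA[OF S gh_gA[OF s]] .
  then have "iv \<phi> s \<in> Rep X Y \<phi> ?v" using False ne ii unfolding Rep_def by auto
  then show ?thesis using that[of "iv \<phi> s" 1] False gh_notfm[OF s] unfolding sig_def by auto
qed

lemma h_lt: "v \<in> verts Y \<Longrightarrow> r \<in> Rep X Y \<phi> v \<Longrightarrow> h v r < gn v"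
proof -
  assume v: "v \<in> verts Y" and r: "r \<in> Rep X Y \<phi> v"
  have "h v ` Rep X Y \<phi> v = {0..<gn v}" using hb v by (simp add: bij_betw_def)
  then have "h v r \<in> {0..<gn v}" using r by blast
  then show ?thesis by simp
qed

lemma sig_gh_fresh: "s \<in> gh X Y \<phi> \<Longrightarrow> sig s \<in> fresh Y gn"
proof -
  assume s: "s \<in> gh X Y \<phi>"
  obtain r b where rb: "r \<in> Rep X Y \<phi> (vm \<phi> (bd X s))" "b < 2"
    "sig s = fr Y (vm \<phi> (bd X s)) (h (vm \<phi> (bd X s)) r) b" by (rule sig_gh[OF s])
  then show ?thesis unfolding fresh_def using h_lt[OF gh_v[OF s] rb(1)] gh_v[OF s] by blast
qed

lemma sig_civ: "s \<in> gh X Y \<phi> \<Longrightarrow> civ Y (sig s) = sig (iv \<phi> s)"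
proof -
  assume s: "s \<in> gh X Y \<phi>"
  let ?v = "vm \<phi> (bd X s)"
  have i: "iv \<phi> s \<in> gh X Y \<phi>" using semD(10)[OF S s] .
  have vi: "vm \<phi> (bd X (iv \<phi> s)) = ?v" using semD(13)[OF S s] .
  have ii: "iv \<phi> (iv \<phi> s) = s" using semD(12)[OF S s] .
  have ne: "iv \<phi> s \<noteq> s" using semD(11)[OF S s] .
  show ?thesis
  proof (cases "s < iv \<phi> s")
    case True
    have "sig s = fr Y ?v (h ?v s) 0" using True gh_notfm[OF s] unfolding sig_def by simp
    moreover have "sig (iv \<phi> s) = fr Y ?v (h ?v s) 1" using True gh_notfm[OF i] vi ii unfolding sig_def by simp
    ultimately show ?thesis using civ_fr0 by simp
  next
    case False
    have "sig s = fr Y ?v (h ?v (iv \<phi> s)) 1" using False gh_notfm[OF s] unfolding sig_def by simp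
    moreover have "sig (iv \<phi> s) = fr Y ?v (h ?v (iv \<phi> s)) 0"
      using False ne gh_notfm[OF i] vi ii unfolding sig_def by (simp add: not_less order_le_neq_trans)
    ultimately show ?thesis using civ_fr1 by simp
  qed
qed

lemma flagsX: "flags X = fm \<phi> ` flags Y \<union> gh X Y \<phi>" using semD(7)[OF S] unfolding gh_def by blast

lemma sig_inj: "inj_on sig (flags X)"
proof (rule inj_onI)
  fix a b assume a: "a \<in> flags X" and b: "b \<in> flags X" and e: "sig a = sig b"
  have disj: "flags Y \<inter> fresh Y gn = {}" using fresh_disj[OF fY] .
  show "a = b"
  proof (cases "a \<in> fm \<phi> ` flags Y")
    case True
    then obtain y where y: "y \<in> flags Y" "a = fm \<phi> y" by blast
    show ?thesis
    proof (cases "b \<in> fm \<phi> ` flags Y")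
      case True
      then obtain y' where y': "y' \<in> flags Y" "b = fm \<phi> y'" by blast
      then show ?thesis using y e sig_fm by simp
    next
      case False
      then have bg: "b \<in> gh X Y \<phi>" using b flagsX by blast
      have "sig b \<in> fresh Y gn" using sig_gh_fresh[OF bg] .
      moreover have "sig a \<in> flags Y" using y sig_fm by simp
      ultimately show ?thesis using e disj by auto
    qed
  next
    case False
    then have ag: "a \<in> gh X Y \<phi>" using a flagsX by blast
    show ?thesis
    proof (cases "b \<in> fm \<phi> ` flags Y")
      case True
      then obtain y' where y': "y' \<in> flags Y" "b = fm \<phi> y'" by blast
      have "sig a \<in> fresh Y gn" using sig_gh_fresh[OF ag] .
      moreover have "sig b \<in> flags Y" using y' sig_fm by simp
      ultimately show ?thesis using e disj by auto
    next
      case False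
      then have bg: "b \<in> gh X Y \<phi>" using b flagsX by blast
      obtain r c where r: "r \<in> Rep X Y \<phi> (vm \<phi> (bd X a))" "c < 2"
        "sig a = fr Y (vm \<phi> (bd X a)) (h (vm \<phi> (bd X a)) r) c" "c = 0 \<longleftrightarrow> a < iv \<phi> a"
        "r = (if a < iv \<phi> a then a else iv \<phi> a)" by (rule sig_gh[OF ag])
      obtain r' c' where r': "r' \<in> Rep X Y \<phi> (vm \<phi> (bd X b))" "c' < 2"
        "sig b = fr Y (vm \<phi> (bd X b)) (h (vm \<phi> (bd X b)) r') c'" "c' = 0 \<longleftrightarrow> b < iv \<phi> b"
        "r' = (if b < iv \<phi> b then b else iv \<phi> b)" by (rule sig_gh[OF bg])
      have eq: "vm \<phi> (bd X a) = vm \<phi> (bd X b)" "h (vm \<phi> (bd X a)) r = h (vm \<phi> (bd X b)) r'" "c = c'"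
        using fr_inj[OF r(2) r'(2)] e r(3) r'(3) by metis+
      have injh: "inj_on (h (vm \<phi> (bd X a))) (Rep X Y \<phi> (vm \<phi> (bd X a)))"
        using hb gh_v[OF ag] by (auto simp: bij_betw_def)
      have "r = r'" using inj_onD[OF injh eq(2)[folded eq(1)] r(1)] r'(1) eq(1) by simp
      then show ?thesis using r(4,5) r'(4,5) eq(3) semD(12)[OF S ag] semD(12)[OF S bg]
        by (metis (full_types))
    qed
  qed
qed

lemma sig_img: "sig ` flags X = cflags Y gn"
proof
  show "sig ` flags X \<subseteq> cflags Y gn"
  proof
    fix x assume "x \<in> sig ` flags X"
    then obtain a where a: "a \<in> flags X" "x = sig a" by blast
    show "x \<in> cflags Y gn"
    proof (cases "a \<in> fm \<phi> ` flags Y")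
      case True then show ?thesis using a sig_fm by (auto simp: cflags_def)
    next
      case False then have "a \<in> gh X Y \<phi>" using a flagsX by blast
      then show ?thesis using a sig_gh_fresh by (auto simp: cflags_def)
    qed
  qed
  show "cflags Y gn \<subseteq> sig ` flags X"
  proof
    fix x assume x: "x \<in> cflags Y gn"
    show "x \<in> sig ` flags X"
    proof (cases "x \<in> flags Y")
      case True
      then show ?thesis using sig_fm[OF True] semD(7)[OF S] by (metis image_eqI image_subset_iff)
    next
      case False
      then obtain v k b where w: "v \<in> verts Y" "k < gn v" "b < 2" "x = fr Y v k b"
        using x unfolding cflags_def fresh_def by blast
      have "k \<in> h v ` Rep X Y \<phi> v" using hb w by (auto simp: bij_betw_def)
      then obtain r where r: "r \<in> Rep X Y \<phi> v" "h v r = k" by blast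
      have rA: "r \<in> gA X Y \<phi> v" and rlt: "r < iv \<phi> r" using r unfolding Rep_def by auto
      have rg: "r \<in> gh X Y \<phi>" and rv: "vm \<phi> (bd X r) = v" using rA unfolding gA_def by auto
      have rX: "r \<in> flags X" using rg unfolding gh_def by blast
      have ig: "iv \<phi> r \<in> gh X Y \<phi>" using semD(10)[OF S rg] .
      have iX: "iv \<phi> r \<in> flags X" using ig unfolding gh_def by blast
      have s0: "sig r = fr Y v k 0" using rlt rv r(2) gh_notfm[OF rg] unfolding sig_def by simp
      have "sig (iv \<phi> r) = civ Y (sig r)" using sig_civ[OF rg] by simp
      then have s1: "sig (iv \<phi> r) = fr Y v k 1" using s0 civ_fr0 by simp
      show ?thesis
      proof (cases "b = 0")
        case True then show ?thesis using s0 w rX by (metis image_eqI)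
      next
        case False then have "b = 1" using w by simp
        then show ?thesis using s1 w iX by (metis image_eqI)
      qed
    qed
  qed
qed

lemma sig_bij: "bij_betw sig (flags X) (cflags Y gn)"
  using sig_inj sig_img by (simp add: bij_betw_def)

definition psi :: mor where
  "psi = (restrict (vm \<phi>) (verts X), restrict (the_inv_into (flags X) sig) (cflags Y gn), (\<lambda>_. undefined))"

lemma psi_iso: "iso_mor X Xc psi"
proof -
  have bV: "bij_betw (vm \<phi>) (verts X) (verts Xc)"
    using vm_inj_lps[OF S lps] semD(4)[OF S] by (simp add: bij_betw_def)
  have bF: "bij_betw sig (flags X) (flags Xc)" using sig_bij by simp
  have inc: "\<forall>f\<in>flags X. bd Xc (sig f) = vm \<phi> (bd X f)"
  proof
    fix f assume f: "f \<in> flags X"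
    have sc: "sig f \<in> cflags Y gn" using f sig_img by blast
    show "bd Xc (sig f) = vm \<phi> (bd X f)"
    proof (cases "f \<in> fm \<phi> ` flags Y")
      case True
      then obtain y where y: "y \<in> flags Y" "f = fm \<phi> y" by blast
      then show ?thesis using sig_fm[OF y(1)] sc semD(8)[OF S y(1)] by (simp add: cbd_def)
    next
      case False
      then have fg: "f \<in> gh X Y \<phi>" using f flagsX by blast
      obtain r b where rb: "r \<in> Rep X Y \<phi> (vm \<phi> (bd X f))" "b < 2"
        "sig f = fr Y (vm \<phi> (bd X f)) (h (vm \<phi> (bd X f)) r) b" by (rule sig_gh[OF fg])
      then show ?thesis using sc cbd_fr[OF rb(2) fY] by simp
    qed
  qed
  show ?thesis unfolding iso_mor_def psi_def
    by (rule exI[of _ "vm \<phi>"], rule exI[of _ sig]) (use bV bF inc in simp)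
qed

lemma psi_fm: "y \<in> flags Y \<Longrightarrow> fm psi y = fm \<phi> y"
proof -
  assume y: "y \<in> flags Y"
  have yc: "y \<in> cflags Y gn" using y by (simp add: cflags_def)
  have "the_inv_into (flags X) sig y = fm \<phi> y"
    using sig_fm[OF y] sig_inj semD(7)[OF S] y by (intro the_inv_into_f_eq) auto
  then show ?thesis using yc unfolding psi_def by simp
qed

lemma psi_fm_sig: "f \<in> flags X \<Longrightarrow> fm psi (sig f) = f"
proof -
  assume f: "f \<in> flags X"
  have "sig f \<in> cflags Y gn" using f sig_img by blast
  then show ?thesis unfolding psi_def using the_inv_into_f_f[OF sig_inj f] by simp
qed

lemma psi_decomp: "mcomp X Xc Y psi (canM Y gn) = \<phi>"
proof (rule mor_eqI)
  show "vm (mcomp X Xc Y psi (canM Y gn)) = vm \<phi>"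
  proof
    fix a show "vm (mcomp X Xc Y psi (canM Y gn)) a = vm \<phi> a"
      using semD(3,4)[OF S] unfolding psi_def by (cases "a \<in> verts X") (auto simp: extensional_def)
  qed
  show "fm (mcomp X Xc Y psi (canM Y gn)) = fm \<phi>"
  proof
    fix y show "fm (mcomp X Xc Y psi (canM Y gn)) y = fm \<phi> y"
      using semD(5)[OF S] psi_fm by (cases "y \<in> flags Y") (auto simp: extensional_def)
  qed
  show "iv (mcomp X Xc Y psi (canM Y gn)) = iv \<phi>"
  proof
    fix a
    have im1: "fm psi ` fm (canM Y gn) ` flags Y = fm \<phi> ` flags Y"
      using psi_fm by (auto simp: image_iff)
    have im2: "fm psi ` flags Xc = flags X"
    proof -
      have "fm psi ` flags Xc = fm psi ` sig ` flags X" using sig_img by simp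
      also have "\<dots> = flags X" using psi_fm_sig by (auto simp: image_iff)
      finally show ?thesis .
    qed
    have dom: "flags X - fm psi ` fm (canM Y gn) ` flags Y = gh X Y \<phi>" unfolding im1 gh_def ..
    show "iv (mcomp X Xc Y psi (canM Y gn)) a = iv \<phi> a"
    proof (cases "a \<in> gh X Y \<phi>")
      case False
      then show ?thesis using semD(9)[OF S] unfolding mcomp_simps dom by (simp add: extensional_def)
    next
      case True
      have aX: "a \<in> flags X" using True unfolding gh_def by blast
      have inj: "inj_on (fm psi) (flags Xc)"
      proof -
        have "inj_on (the_inv_into (flags X) sig) (sig ` flags X)" using inj_on_the_inv_into[OF sig_inj] .
        then show ?thesis using sig_img unfolding psi_def by (simp add: inj_on_def)
      qed
      have sc: "sig a \<in> flags Xc" using aX sig_img by auto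
      have inv: "the_inv_into (flags Xc) (fm psi) a = sig a"
        by (rule the_inv_into_f_eq[OF inj psi_fm_sig[OF aX] sc])
      have sf: "sig a \<in> fresh Y gn" using sig_gh_fresh[OF True] .
      have ia: "iv \<phi> a \<in> flags X" using semD(10)[OF S True] unfolding gh_def by blast
      have "iv (mcomp X Xc Y psi (canM Y gn)) a = fm psi (civ Y (sig a))"
        unfolding mcomp_simps dom using True aX im2 inv sf by simp
      also have "\<dots> = iv \<phi> a" using sig_civ[OF True] psi_fm_sig[OF ia] by simp
      finally show ?thesis .
    qed
  qed
qed

end


abbreviation "LE Y \<equiv> lan_equiv Ostar_ob Ostar_ar Y"
abbreviation "LS Y \<equiv> lan_step Ostar_ob Ostar_ar Y"
abbreviation "LC Y \<equiv> lan_carrier Ostar_ob Y"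

lemma LC_iff: "((X,\<phi>),a) \<in> LC Y \<longleftrightarrow> ctd X Y \<phi>"
  unfolding lan_carrier_def Ostar_ob_def by auto

lemma LS_I: "ctd X Y \<phi> \<Longrightarrow> ctd X' Y \<phi>' \<Longrightarrow> forest X X' \<psi> \<Longrightarrow> mcomp X X' Y \<psi> \<phi>' = \<phi>
  \<Longrightarrow> (((X,\<phi>),()),((X',\<phi>'),())) \<in> LS Y"
  unfolding lan_step_def Ostar_ob_def Ostar_ar_def by blast

lemma LS_E: "(e,e') \<in> LS Y \<Longrightarrow> (\<And>X \<phi> X' \<phi>' \<psi>. e = ((X,\<phi>),()) \<Longrightarrow> e' = ((X',\<phi>'),()) \<Longrightarrow> ctd X Y \<phi>
   \<Longrightarrow> ctd X' Y \<phi>' \<Longrightarrow> forest X X' \<psi> \<Longrightarrow> mcomp X X' Y \<psi> \<phi>' = \<phi> \<Longrightarrow> P) \<Longrightarrow> P"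
  unfolding lan_step_def Ostar_ob_def Ostar_ar_def by blast

lemma LS_LC: "(e,e') \<in> LS Y \<Longrightarrow> e \<in> LC Y \<and> e' \<in> LC Y"
  by (erule LS_E) (simp add: LC_iff)

lemma LE_I: "(e,e') \<in> LS Y \<Longrightarrow> (e,e') \<in> LE Y"
  unfolding lan_equiv_def using LS_LC by blast

lemma LE_equiv: "equiv (LC Y) (LE Y)"
proof (rule equivI)
  show "refl_on (LC Y) (LE Y)" unfolding lan_equiv_def by (rule refl_onI) auto
  have "sym ((LS Y \<union> (LS Y)\<inverse>)\<^sup>*)" by (rule sym_rtrancl) (simp add: sym_Un_converse)
  then show "sym (LE Y)" unfolding lan_equiv_def by (auto simp: sym_def)
  show "trans (LE Y)" unfolding lan_equiv_def by (rule transI) (auto intro: rtrancl_trans)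
  show "LE Y \<subseteq> LC Y \<times> LC Y" unfolding lan_equiv_def by blast
qed

lemma LE_sym: "(a,b) \<in> LE Y \<Longrightarrow> (b,a) \<in> LE Y"
  using LE_equiv by (meson equivE symD)
lemma LE_trans: "(a,b) \<in> LE Y \<Longrightarrow> (b,c) \<in> LE Y \<Longrightarrow> (a,c) \<in> LE Y"
  using LE_equiv by (meson equivE transD)
lemma LE_refl: "a \<in> LC Y \<Longrightarrow> (a,a) \<in> LE Y"
  using LE_equiv by (meson equivE refl_onD)
lemma LE_LC: "(a,b) \<in> LE Y \<Longrightarrow> a \<in> LC Y \<and> b \<in> LC Y"
  unfolding lan_equiv_def by blast

definition key :: "agg \<Rightarrow> ((agg \<times> mor) \<times> unit) \<Rightarrow> nat \<Rightarrow> nat" where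
  "key Y e = Gn (fst (fst e)) Y (snd (fst e))"

lemma key_simp[simp]: "key Y ((X,\<phi>),a) = Gn X Y \<phi>" unfolding key_def by simp

lemma Gn_step:
  assumes "forest X X' \<psi>" "ctd X' Y \<phi>'"
  shows "Gn X Y (mcomp X X' Y \<psi> \<phi>') = Gn X' Y \<phi>'"
proof -
  have f: "sem X X' \<psi>" "\<forall>v\<in>verts X'. gG X X' \<psi> v = 0" using forest_sem[OF assms(1)] by auto
  have c: "comp2 X X' Y \<psi> \<phi>'" using f(1) ctd_sem[OF assms(2)] by (rule comp2.intro)
  have "gG X Y (mcomp X X' Y \<psi> \<phi>') v = gG X' Y \<phi>' v" if v: "v \<in> verts Y" for v
  proof -
    have "(\<Sum>w\<in>gB X' \<phi>' v. gG X X' \<psi> w) = 0" by (rule sum.neutral) (use f(2) gB_sub in blast)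
    then show ?thesis using comp2.c_G[OF c v] by simp
  qed
  then show ?thesis unfolding Gn_def by (intro restrict_ext) auto
qed

lemma key_step: "(e,e') \<in> LS Y \<Longrightarrow> key Y e = key Y e'"
proof (erule LS_E)
  fix X \<phi> X' \<phi>' \<psi>
  assume "e = ((X, \<phi>), ())" "e' = ((X', \<phi>'), ())" "ctd X Y \<phi>" "ctd X' Y \<phi>'"
    "forest X X' \<psi>" "mcomp X X' Y \<psi> \<phi>' = \<phi>"
  then show "key Y e = key Y e'" using Gn_step[of X X' \<psi> Y \<phi>'] by simp
qed

lemma key_LE: "(e,e') \<in> LE Y \<Longrightarrow> key Y e = key Y e'"
proof -
  assume "(e,e') \<in> LE Y"
  then have "(e,e') \<in> (LS Y \<union> (LS Y)\<inverse>)\<^sup>*" unfolding lan_equiv_def by blast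
  then show ?thesis
  proof (induction rule: rtrancl_induct)
    case base then show ?case by simp
  next
    case (step y z)
    from step(2) have "key Y y = key Y z"
    proof
      assume "(y,z) \<in> LS Y" then show ?thesis by (rule key_step)
    next
      assume "(y,z) \<in> (LS Y)\<inverse>" then have "(z,y) \<in> LS Y" by simp
      then show ?thesis by (rule key_step[symmetric])
    qed
    then show ?case using step(3) by simp
  qed
qed

lemma Gn_ext: "Gn X Y \<phi> \<in> extensional (verts Y)" unfolding Gn_def by simp

lemma Gn_can: "is_agg Y \<Longrightarrow> g \<in> extensional (verts Y) \<Longrightarrow> Gn (canX Y g) Y (canM Y g) = g"
proof -
  assume Y: "is_agg Y" and g: "g \<in> extensional (verts Y)"
  have "Gn (canX Y g) Y (canM Y g) v = g v" for v
    using can_sem(2)[OF Y] g unfolding Gn_def by (cases "v \<in> verts Y") (auto simp: extensional_def)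
  then show ?thesis by blast
qed

lemma ctd_can: "is_agg Y \<Longrightarrow> ctd (canX Y g) Y (canM Y g)"
  using sem_ctd can_sem(1) by blast

theorem normal_form:
  "ctd X Y \<phi> \<Longrightarrow> (((X,\<phi>),()), ((canX Y (Gn X Y \<phi>), canM Y (Gn X Y \<phi>)),())) \<in> LE Y"
proof (induction "card (verts X)" arbitrary: X \<phi> rule: less_induct)
  case less
  have C: "ctd X Y \<phi>" using less.prems .
  have S: "sem X Y \<phi>" using ctd_sem[OF C] .
  have Y: "is_agg Y" using semD(2)[OF S] .
  show ?case
  proof (cases "\<exists>s\<in>gh X Y \<phi>. bd X s \<noteq> bd X (iv \<phi> s)")
    case True
    then obtain s where s: "s \<in> gh X Y \<phi>" "bd X s \<noteq> bd X (iv \<phi> s)" by blast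
    interpret red_edge X Y \<phi> s "iv \<phi> s" by unfold_locales (use S s in auto)
    have F: "forest X X1 (edge_mor X s (iv \<phi> s))" using X eok by (rule forest_edge)
    have C1: "ctd X1 Y \<phi>1" using sem_ctd[OF sem1] .
    have st: "(((X,\<phi>),()), ((X1,\<phi>1),())) \<in> LS Y" using LS_I[OF C C1 F decomp] .
    have G: "Gn X Y \<phi> = Gn X1 Y \<phi>1" using Gn_step[OF F C1] decomp by simp
    have "(((X1,\<phi>1),()), ((canX Y (Gn X1 Y \<phi>1), canM Y (Gn X1 Y \<phi>1)),())) \<in> LE Y"
      using less.hyps[OF card_verts1 C1] .
    then show ?thesis using LE_trans[OF LE_I[OF st]] G by simp
  next
    case False
    then have lps: "\<forall>s\<in>gh X Y \<phi>. bd X (iv \<phi> s) = bd X s" by auto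
    have "\<forall>v\<in>verts Y. \<exists>hv. bij_betw hv (Rep X Y \<phi> v) {0..<Gn X Y \<phi> v}"
    proof
      fix v assume v: "v \<in> verts Y"
      have "finite (Rep X Y \<phi> v)"
        using gA_finite[OF semD(1)[OF S]] unfolding Rep_def by (rule rev_finite_subset) auto
      then show "\<exists>hv. bij_betw hv (Rep X Y \<phi> v) {0..<Gn X Y \<phi> v}"
        using ex_bij_betw_finite_nat card_Rep[OF S lps v] by metis
    qed
    then obtain h where h: "\<forall>v\<in>verts Y. bij_betw (h v) (Rep X Y \<phi> v) {0..<Gn X Y \<phi> v}"
      by metis
    interpret loopnf X Y \<phi> h by unfold_locales (use S lps h in auto)
    have F: "forest X Xc psi" using X semD(1)[OF can_sem(1)[OF Y]] psi_iso by (rule forest_iso)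
    have C1: "ctd Xc Y (canM Y gn)" using ctd_can[OF Y] .
    show ?thesis using LE_I[OF LS_I[OF C C1 F psi_decomp]] .
  qed
qed


definition beta :: "agg \<Rightarrow> ((agg \<times> mor) \<times> unit) set \<Rightarrow> (nat \<Rightarrow> nat)" where
  "beta Y c = key Y (SOME e. e \<in> c)"

lemma lan_elem:
  assumes "c \<in> lan Ostar_ob Ostar_ar Y"
  obtains X \<phi> where "ctd X Y \<phi>" "c = LE Y `` {((X,\<phi>),())}"
proof -
  from assms obtain x where x: "x \<in> LC Y" "c = LE Y `` {x}" unfolding lan_def by (auto elim: quotientE)
  obtain X \<phi> u where "x = ((X,\<phi>),u)" by (metis prod.exhaust)
  then show ?thesis using that x LC_iff by auto
qed

lemma class_in_lan: "ctd X Y \<phi> \<Longrightarrow> LE Y `` {((X,\<phi>),())} \<in> lan Ostar_ob Ostar_ar Y"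
  unfolding lan_def by (rule quotientI) (simp add: LC_iff)

lemma beta_class: "ctd X Y \<phi> \<Longrightarrow> beta Y (LE Y `` {((X,\<phi>),())}) = Gn X Y \<phi>"
proof -
  assume C: "ctd X Y \<phi>"
  let ?e0 = "((X,\<phi>),())"
  have "?e0 \<in> LE Y `` {?e0}" using LE_refl[of ?e0 Y] C by (simp add: LC_iff)
  then have "(SOME e. e \<in> LE Y `` {?e0}) \<in> LE Y `` {?e0}" by (rule someI)
  then have "(?e0, SOME e. e \<in> LE Y `` {?e0}) \<in> LE Y" by simp
  then show ?thesis unfolding beta_def using key_LE by fastforce
qed

lemma class_eq: "(a,b) \<in> LE Y \<Longrightarrow> LE Y `` {a} = LE Y `` {b}"
  using equiv_class_eq[OF LE_equiv] .

lemma beta_bij: "is_agg Y \<Longrightarrow> bij_betw (beta Y) (lan Ostar_ob Ostar_ar Y) (genus_ob Y)"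
proof -
  assume Y: "is_agg Y"
  show ?thesis unfolding bij_betw_def
  proof (intro conjI)
    show "inj_on (beta Y) (lan Ostar_ob Ostar_ar Y)"
    proof (rule inj_onI)
      fix c1 c2 assume c1: "c1 \<in> lan Ostar_ob Ostar_ar Y" and c2: "c2 \<in> lan Ostar_ob Ostar_ar Y"
        and e: "beta Y c1 = beta Y c2"
      obtain X1 \<phi>1 where r1: "ctd X1 Y \<phi>1" "c1 = LE Y `` {((X1,\<phi>1),())}" using c1 by (rule lan_elem)
      obtain X2 \<phi>2 where r2: "ctd X2 Y \<phi>2" "c2 = LE Y `` {((X2,\<phi>2),())}" using c2 by (rule lan_elem)
      have g: "Gn X1 Y \<phi>1 = Gn X2 Y \<phi>2" using e r1 r2 beta_class by simp
      have n1: "(((X1,\<phi>1),()), ((canX Y (Gn X2 Y \<phi>2), canM Y (Gn X2 Y \<phi>2)),())) \<in> LE Y"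
        using normal_form[OF r1(1)] g by simp
      have "(((X1,\<phi>1),()), ((X2,\<phi>2),())) \<in> LE Y"
        using LE_trans[OF n1 LE_sym[OF normal_form[OF r2(1)]]] .
      then show "c1 = c2" using r1 r2 class_eq by simp
    qed
    show "beta Y ` lan Ostar_ob Ostar_ar Y = genus_ob Y"
    proof
      show "beta Y ` lan Ostar_ob Ostar_ar Y \<subseteq> genus_ob Y"
      proof
        fix g assume "g \<in> beta Y ` lan Ostar_ob Ostar_ar Y"
        then obtain c where c: "c \<in> lan Ostar_ob Ostar_ar Y" "g = beta Y c" by blast
        obtain X \<phi> where r: "ctd X Y \<phi>" "c = LE Y `` {((X,\<phi>),())}" using c(1) by (rule lan_elem)
        show "g \<in> genus_ob Y" using c r beta_class Gn_ext unfolding genus_ob_def by simp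
      qed
      show "genus_ob Y \<subseteq> beta Y ` lan Ostar_ob Ostar_ar Y"
      proof
        fix g assume g: "g \<in> genus_ob Y"
        have C: "ctd (canX Y g) Y (canM Y g)" using ctd_can[OF Y] .
        have "beta Y (LE Y `` {((canX Y g, canM Y g),())}) = g"
          using beta_class[OF C] Gn_can[OF Y] g unfolding genus_ob_def by simp
        then show "g \<in> beta Y ` lan Ostar_ob Ostar_ar Y" using class_in_lan[OF C] by (metis image_eqI)
      qed
    qed
  qed
qed

definition post :: "agg \<Rightarrow> agg \<Rightarrow> mor \<Rightarrow> ((agg \<times> mor) \<times> unit) \<Rightarrow> ((agg \<times> mor) \<times> unit)" where
  "post Y Y' f e = ((fst (fst e), mcomp (fst (fst e)) Y Y' (snd (fst e)) f), snd e)"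

lemma post_simp[simp]: "post Y Y' f ((X,\<phi>),u) = ((X, mcomp X Y Y' \<phi> f), u)" unfolding post_def by simp

lemma post_step:
  assumes f: "ctd Y Y' f" and st: "(a,b) \<in> LS Y"
  shows "(post Y Y' f a, post Y Y' f b) \<in> LS Y'"
  using st
proof (rule LS_E)
  fix X \<phi> X' \<phi>' \<psi>
  assume a: "a = ((X, \<phi>), ())" and b: "b = ((X', \<phi>'), ())" and C: "ctd X Y \<phi>" and C': "ctd X' Y \<phi>'"
    and F: "forest X X' \<psi>" and eq: "mcomp X X' Y \<psi> \<phi>' = \<phi>"
  have "mcomp X X' Y' \<psi> (mcomp X' Y Y' \<phi>' f) = mcomp X Y Y' \<phi> f"
    using mcomp_assoc[OF conjunct1[OF forest_sem[OF F]] ctd_sem[OF C'] ctd_sem[OF f]] eq by simp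
  then show ?thesis unfolding a b post_simp
    by (rule LS_I[OF ctd_comp[OF C f] ctd_comp[OF C' f] F])
qed

lemma post_LE:
  assumes f: "ctd Y Y' f" and r: "(a,b) \<in> LE Y"
  shows "(post Y Y' f a, post Y Y' f b) \<in> LE Y'"
proof -
  have post_LC: "post Y Y' f x \<in> LC Y'" if "x \<in> LC Y" for x
  proof -
    obtain X \<phi> u where x: "x = ((X,\<phi>),u)" by (metis prod.exhaust)
    then show ?thesis using that ctd_comp[OF _ f] by (simp add: LC_iff)
  qed
  have ab: "a \<in> LC Y" "b \<in> LC Y" using LE_LC[OF r] by auto
  have "(a,b) \<in> (LS Y \<union> (LS Y)\<inverse>)\<^sup>*" using r unfolding lan_equiv_def by blast
  then have "(post Y Y' f a, post Y Y' f b) \<in> (LS Y' \<union> (LS Y')\<inverse>)\<^sup>*"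
  proof (induction rule: rtrancl_induct)
    case base then show ?case by simp
  next
    case (step y z)
    from step(2) have "(post Y Y' f y, post Y Y' f z) \<in> LS Y' \<union> (LS Y')\<inverse>"
    proof
      assume "(y,z) \<in> LS Y" then show ?thesis using post_step[OF f] by blast
    next
      assume "(y,z) \<in> (LS Y)\<inverse>" then have "(z,y) \<in> LS Y" by simp
      then show ?thesis using post_step[OF f] by blast
    qed
    then show ?case using step(3) by (rule rtrancl_into_rtrancl[rotated])
  qed
  then show ?thesis unfolding lan_equiv_def using post_LC ab by blast
qed

lemma lan_map_class:
  assumes f: "ctd Y Y' f" and C: "ctd X Y \<phi>"
  shows "lan_map Ostar_ob Ostar_ar Y Y' f (LE Y `` {((X,\<phi>),())}) = LE Y' `` {((X, mcomp X Y Y' \<phi> f),())}"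
proof -
  let ?e0 = "((X,\<phi>),())"
  let ?P = "\<lambda>((X, \<phi>), a). lan_class Ostar_ob Ostar_ar Y' ((X, mcomp X Y Y' \<phi> f), a)"
  have P: "?P e = LE Y' `` {post Y Y' f e}" for e
    by (cases e) (auto simp: lan_class_def)
  have "?P ` (LE Y `` {?e0}) = {LE Y' `` {post Y Y' f ?e0}}"
  proof
    show "?P ` (LE Y `` {?e0}) \<subseteq> {LE Y' `` {post Y Y' f ?e0}}"
    proof
      fix x assume "x \<in> ?P ` (LE Y `` {?e0})"
      then obtain e where e: "(?e0, e) \<in> LE Y" "x = ?P e" by blast
      have "(post Y Y' f ?e0, post Y Y' f e) \<in> LE Y'" using post_LE[OF f e(1)] .
      then show "x \<in> {LE Y' `` {post Y Y' f ?e0}}" using e(2) P class_eq by simp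
    qed
    have "?e0 \<in> LE Y `` {?e0}" using LE_refl[of ?e0 Y] C by (simp add: LC_iff)
    then have "?P ?e0 \<in> ?P ` (LE Y `` {?e0})" by (rule imageI)
    then show "{LE Y' `` {post Y Y' f ?e0}} \<subseteq> ?P ` (LE Y `` {?e0})" unfolding P[of ?e0] by simp
  qed
  then show ?thesis unfolding lan_map_def by simp
qed


lemma G_post:
  assumes C: "ctd X Y \<phi>" and f: "sem Y Y' f" and w: "w \<in> verts Y'"
  shows "gG X Y' (mcomp X Y Y' \<phi> f) w = (\<Sum>u\<in>gB Y f w. gG X Y \<phi> u) + gG Y Y' f w"
proof -
  have c: "comp2 X Y Y' \<phi> f" using ctd_sem[OF C] f by (rule comp2.intro)
  show ?thesis using comp2.c_G[OF c w] .
qed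

lemma Gn_val: "v \<in> verts Y \<Longrightarrow> Gn X Y \<phi> v = nat (gG X Y \<phi> v)" unfolding Gn_def by simp
lemma Gn_out: "v \<notin> verts Y \<Longrightarrow> Gn X Y \<phi> v = undefined" unfolding Gn_def by simp

lemma nat_iso:
  assumes Y: "is_agg Y" and Y': "is_agg Y'" and m: "iso_mor Y Y' m" and C: "ctd X Y \<phi>"
  shows "Gn X Y' (mcomp X Y Y' \<phi> m) = genus_iso Y Y' m (Gn X Y \<phi>)"
proof
  fix w
  show "Gn X Y' (mcomp X Y Y' \<phi> m) w = genus_iso Y Y' m (Gn X Y \<phi>) w"
  proof (cases "w \<in> verts Y'")
    case False then show ?thesis unfolding genus_iso_def by (simp add: Gn_out)
  next
    case True
    let ?u = "the_inv_into (verts Y) (vm m) w"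
    have B: "gB Y m w = {?u}" using sem_iso(3)[OF Y Y' m True] .
    have u: "?u \<in> verts Y" using B gB_sub by blast
    have "gG X Y' (mcomp X Y Y' \<phi> m) w = gG X Y \<phi> ?u"
      using G_post[OF C sem_iso(1)[OF Y Y' m] True] B sem_iso(2)[OF Y Y' m True] by simp
    then show ?thesis unfolding genus_iso_def using True u by (simp add: Gn_val)
  qed
qed

lemma nat_edge:
  assumes Y: "is_agg Y" and ok: "edge_ok Y s t" and C: "ctd X Y \<phi>"
  shows "Gn X (edge_target Y s t) (mcomp X Y (edge_target Y s t) \<phi> (edge_mor Y s t)) = genus_edge Y s t (Gn X Y \<phi>)"
proof
  fix w
  let ?Y' = "edge_target Y s t" and ?f = "edge_mor Y s t"
  have S: "sem X Y \<phi>" using ctd_sem[OF C] .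
  have st: "bd Y s \<noteq> bd Y t" and sY: "s \<in> flags Y" and tY: "t \<in> flags Y" using ok unfolding edge_ok_def by auto
  have bs: "bd Y s \<in> verts Y" and bt: "bd Y t \<in> verts Y" using is_aggD(3)[OF Y] sY tY by auto
  show "Gn X ?Y' (mcomp X Y ?Y' \<phi> ?f) w = genus_edge Y s t (Gn X Y \<phi>) w"
  proof (cases "w \<in> verts ?Y'")
    case False
    then have "Gn X ?Y' (mcomp X Y ?Y' \<phi> ?f) w = undefined" by (simp add: Gn_out)
    moreover have "genus_edge Y s t (Gn X Y \<phi>) w = undefined" unfolding genus_edge_def using False by auto
    ultimately show ?thesis by simp
  next
    case True
    have G: "gG X ?Y' (mcomp X Y ?Y' \<phi> ?f) w = (\<Sum>u\<in>gB Y ?f w. gG X Y \<phi> u)"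
      using G_post[OF C sem_edge(1)[OF Y ok] True] sem_edge(3)[OF Y ok True] by simp
    have wY: "w \<in> verts Y" using True by simp
    show ?thesis
    proof (cases "w = bd Y s")
      case True2: True
      have "gG X ?Y' (mcomp X Y ?Y' \<phi> ?f) w = gG X Y \<phi> (bd Y s) + gG X Y \<phi> (bd Y t)"
        using G sem_edge(4)[OF Y ok True] True2 st by simp
      moreover have "0 \<le> gG X Y \<phi> (bd Y s)" "0 \<le> gG X Y \<phi> (bd Y t)" using semD(15)[OF S] bs bt by auto
      ultimately show ?thesis unfolding genus_edge_def using True True2 bs bt
        by (simp add: Gn_val nat_add_distrib)
    next
      case False
      have "gG X ?Y' (mcomp X Y ?Y' \<phi> ?f) w = gG X Y \<phi> w"
        using G sem_edge(4)[OF Y ok True] False by simp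
      then show ?thesis unfolding genus_edge_def using True False wY by (simp add: Gn_val)
    qed
  qed
qed

lemma nat_loop:
  assumes Y: "is_agg Y" and ok: "loop_ok Y s t" and C: "ctd X Y \<phi>"
  shows "Gn X (loop_target Y s t) (mcomp X Y (loop_target Y s t) \<phi> (loop_mor Y s t)) = genus_loop Y s t (Gn X Y \<phi>)"
proof
  fix w
  let ?Y' = "loop_target Y s t" and ?f = "loop_mor Y s t"
  have S: "sem X Y \<phi>" using ctd_sem[OF C] .
  show "Gn X ?Y' (mcomp X Y ?Y' \<phi> ?f) w = genus_loop Y s t (Gn X Y \<phi>) w"
  proof (cases "w \<in> verts Y")
    case False then show ?thesis unfolding genus_loop_def by (simp add: Gn_out)
  next
    case True
    have w': "w \<in> verts ?Y'" using True by simp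
    have G: "gG X ?Y' (mcomp X Y ?Y' \<phi> ?f) w = gG X Y \<phi> w + (if w = bd Y s then 1 else 0)"
      using G_post[OF C sem_loop(1)[OF Y ok] w'] sem_loop(3,4)[OF Y ok True] by simp
    have "0 \<le> gG X Y \<phi> w" using semD(15)[OF S True] .
    then show ?thesis unfolding genus_loop_def using True G
      by (auto simp: Gn_val nat_add_distrib)
  qed
qed

lemma star_b1:
  assumes C: "ctd X (star S) \<phi>"
  shows "int (Gn X (star S) \<phi> 0) = b1 X (star S) \<phi>"
proof -
  have Sm: "sem X (star S) \<phi>" using ctd_sem[OF C] .
  have X: "is_agg X" using semD(1)[OF Sm] .
  have vm0: "x \<in> verts X \<Longrightarrow> vm \<phi> x = 0" for x using semD(4)[OF Sm] by auto
  have A: "gA X (star S) \<phi> 0 = gh X (star S) \<phi>"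
    unfolding gA_def using vm0 is_aggD(3)[OF X] unfolding gh_def by auto
  have B: "gB X \<phi> 0 = verts X" unfolding gB_def using vm0 by auto
  have "0 \<le> gG X (star S) \<phi> 0" using semD(15)[OF Sm] by simp
  then have "int (Gn X (star S) \<phi> 0) = gG X (star S) \<phi> 0" by (simp add: Gn_val)
  also have "\<dots> = b1 X (star S) \<phi>" unfolding gG_def b1_def A B gh_def by simp
  finally show ?thesis .
qed

lemma ev0_bij: "bij_betw (\<lambda>g. g 0) (extensional {0::nat}) (UNIV :: nat set)"
proof (rule bij_betwI[where g = "\<lambda>n. restrict (\<lambda>_. n) {0}"])
  show "(\<lambda>g. g 0) \<in> extensional {0} \<rightarrow> UNIV" by simp
  show "(\<lambda>n. restrict (\<lambda>_. n) {0::nat}) \<in> UNIV \<rightarrow> extensional {0}" by simp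
  show "\<And>x. x \<in> extensional {0} \<Longrightarrow> restrict (\<lambda>_. x 0) {0} = x"
    by (rule extensionalityI[where A = "{0}"]) auto
  show "\<And>y. y \<in> UNIV \<Longrightarrow> restrict (\<lambda>_. y) {0::nat} 0 = y" by simp
qed

theorem proposition5p4:
  shows "(\<exists>\<beta> :: agg \<Rightarrow> ((agg \<times> mor) \<times> unit) set \<Rightarrow> (nat \<Rightarrow> nat).
           (\<forall>Y. is_agg Y \<longrightarrow> bij_betw (\<beta> Y) (lan Ostar_ob Ostar_ar Y) (genus_ob Y))
         \<and> (\<forall>Y Y' m. is_agg Y \<and> is_agg Y' \<and> iso_mor Y Y' m \<longrightarrow>
              (\<forall>c \<in> lan Ostar_ob Ostar_ar Y.
                 \<beta> Y' (lan_map Ostar_ob Ostar_ar Y Y' m c) = genus_iso Y Y' m (\<beta> Y c)))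
         \<and> (\<forall>Y s t. is_agg Y \<and> edge_ok Y s t \<longrightarrow>
              (\<forall>c \<in> lan Ostar_ob Ostar_ar Y.
                 \<beta> (edge_target Y s t) (lan_map Ostar_ob Ostar_ar Y (edge_target Y s t) (edge_mor Y s t) c)
                   = genus_edge Y s t (\<beta> Y c)))
         \<and> (\<forall>Y s t. is_agg Y \<and> loop_ok Y s t \<longrightarrow>
              (\<forall>c \<in> lan Ostar_ob Ostar_ar Y.
                 \<beta> (loop_target Y s t) (lan_map Ostar_ob Ostar_ar Y (loop_target Y s t) (loop_mor Y s t) c)
                   = genus_loop Y s t (\<beta> Y c))))
       \<and> (\<forall>S :: nat set. finite S \<longrightarrow>
           (\<exists>\<gamma>. bij_betw \<gamma> (lan Ostar_ob Ostar_ar (star S)) (UNIV :: nat set)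
              \<and> (\<forall>X \<phi>. ctd X (star S) \<phi> \<longrightarrow>
                   int (\<gamma> (lan_class Ostar_ob Ostar_ar (star S) ((X, \<phi>), ()))) = b1 X (star S) \<phi>)))"
proof (intro conjI exI[of _ beta] allI impI ballI)
  show "\<And>Y. is_agg Y \<Longrightarrow> bij_betw (beta Y) (lan Ostar_ob Ostar_ar Y) (genus_ob Y)" by (rule beta_bij)
next
  fix Y Y' m c
  assume a: "is_agg Y \<and> is_agg Y' \<and> iso_mor Y Y' m" and c: "c \<in> lan Ostar_ob Ostar_ar Y"
  obtain X \<phi> where r: "ctd X Y \<phi>" "c = LE Y `` {((X,\<phi>),())}" using c by (rule lan_elem)
  have f: "ctd Y Y' m" using a by (blast intro: ctd_iso)
  show "beta Y' (lan_map Ostar_ob Ostar_ar Y Y' m c) = genus_iso Y Y' m (beta Y c)"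
    unfolding r(2) lan_map_class[OF f r(1)] beta_class[OF r(1)] beta_class[OF ctd_comp[OF r(1) f]]
    using nat_iso a r(1) by blast
next
  fix Y s t c
  assume a: "is_agg Y \<and> edge_ok Y s t" and c: "c \<in> lan Ostar_ob Ostar_ar Y"
  obtain X \<phi> where r: "ctd X Y \<phi>" "c = LE Y `` {((X,\<phi>),())}" using c by (rule lan_elem)
  have f: "ctd Y (edge_target Y s t) (edge_mor Y s t)" using a by (blast intro: ctd_edge)
  show "beta (edge_target Y s t) (lan_map Ostar_ob Ostar_ar Y (edge_target Y s t) (edge_mor Y s t) c)
                   = genus_edge Y s t (beta Y c)"
    unfolding r(2) lan_map_class[OF f r(1)] beta_class[OF r(1)] beta_class[OF ctd_comp[OF r(1) f]]
    using nat_edge a r(1) by blast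
next
  fix Y s t c
  assume a: "is_agg Y \<and> loop_ok Y s t" and c: "c \<in> lan Ostar_ob Ostar_ar Y"
  obtain X \<phi> where r: "ctd X Y \<phi>" "c = LE Y `` {((X,\<phi>),())}" using c by (rule lan_elem)
  have f: "ctd Y (loop_target Y s t) (loop_mor Y s t)" using a by (blast intro: ctd_loop)
  show "beta (loop_target Y s t) (lan_map Ostar_ob Ostar_ar Y (loop_target Y s t) (loop_mor Y s t) c)
                   = genus_loop Y s t (beta Y c)"
    unfolding r(2) lan_map_class[OF f r(1)] beta_class[OF r(1)] beta_class[OF ctd_comp[OF r(1) f]]
    using nat_loop a r(1) by blast
next
  fix S :: "nat set" assume fS: "finite S"
  have Y: "is_agg (star S)" using is_agg_star[OF fS] .
  have b: "bij_betw (beta (star S)) (lan Ostar_ob Ostar_ar (star S)) (extensional {0})"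
    using beta_bij[OF Y] unfolding genus_ob_def by simp
  have bij: "bij_betw ((\<lambda>g. g 0) \<circ> beta (star S)) (lan Ostar_ob Ostar_ar (star S)) UNIV"
    using bij_betw_trans[OF b ev0_bij] .
  have val: "int (((\<lambda>g. g 0) \<circ> beta (star S)) (lan_class Ostar_ob Ostar_ar (star S) ((X, \<phi>), ()))) = b1 X (star S) \<phi>"
    if C: "ctd X (star S) \<phi>" for X \<phi>
    unfolding lan_class_def comp_def beta_class[OF C] using star_b1[OF C] .
  show "\<exists>\<gamma>. bij_betw \<gamma> (lan Ostar_ob Ostar_ar (star S)) UNIV \<and>
          (\<forall>X \<phi>. ctd X (star S) \<phi> \<longrightarrow> int (\<gamma> (lan_class Ostar_ob Ostar_ar (star S) ((X, \<phi>), ()))) = b1 X (star S) \<phi>)"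
    using bij val by blast
qed


end
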